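(* In the setting described in the context, suppose $T$ is irreducible, $A$ is irreducible, $\rho<1$, $r_A>1$, and there is a finite $\theta$ with $1<\theta<r_A$ and $\theta=\delta(A^*(\theta))$. Then $R:=R^*(1)$ is irreducible, or, after a simultaneous permutation of rows and columns, it takes the form \[ R=\begin{pmatrix}R_1&R_{1,\bullet}\\ O&R_\bullet\end{pmatrix}, \] where $R_1$ is irreducible and $R_\bullet$ is strictly upper triangular.
   Context: Let $M_0,M$ be positive integers. Consider a discrete-time Markov chain $\{(X_n,S_n)\}_{n\ge0}$ of M/G/1 type with state space $\{(0,j):1\le j\le M_0\}\cup\{(k,j):k\ge1,1\le j\le M\}$ (level $k$ = states with first coordinate $k$), with transition matrix in lexicographic order \[ T=\begin{pmatrix}B(0)&B(1)&B(2)&\cdots\\ C(0)&A(1)&A(2)&\cdots\\ O&A(0)&A(1)&\cdots\\ O&O&A(0)&\cdots\\ \vdots&\vdots&\vdots&\ddots\end{pmatrix}, \] with nonnegative blocks $A(k)$ ($M\times M$), $B(0)$, $B(k)$ ($k\ge1$), $C(0)$ of compatible sizes; $A=\sum_{k\ge0}A(k)$ stochastic, $B(0)e+\sum_{k\ge1}B(k)e=e$; $\pi A=\pi$, $\pi e=1$, $\rho=\pi\sum_{k\ge1}kA(k)e$. $A^*(z)=\sum_{k\ge0}z^kA(k)$ with convergence radius $r_A$. For a square complex matrix $X$, $\delta(X)$ is a maximum-modulus eigenvalue with nonnegative argument and maximal real part among maximum-modulus eigenvalues (Perron–Frobenius eigenvalue for nonnegative irreducible $X$). $G$ is the $M\times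 M$ matrix with $[G]_{i,j}=\Pr[S_{a(k)}=j\mid X_0=k+1,S_0=i]$ ($a(k)=\inf\{n\ge1:X_n=k\}$). $U(k)=\sum_{m\ge k+1}A(m)G^{m-k-1}$ ($k\ge0$), $R(k)=U(k)(I-U(0))^{-1}$ ($k\ge1$), $R^*(z)=\sum_{k\ge1}z^kR(k)$. *)

theory Defs
  imports "HOL-Analysis.Analysis" "Jordan_Normal_Form.Spectral_Radius"
    "Jordan_Normal_Form.Gauss_Jordan_Elimination"
begin

text \<open>Matrices are Jordan_Normal_Form matrices with real entries, indices 0..n-1.
  Phases 1..M of the paper correspond to indices 0..M-1.\<close>

definition irred :: "nat \<Rightarrow> (nat \<Rightarrow> nat \<Rightarrow> real) \<Rightarrow> bool" where
  "irred n f \<longleftrightarrow>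
     (\<forall>i<n. \<forall>j<n. (i, j) \<in> {(a, b). a < n \<and> b < n \<and> f a b > 0}\<^sup>+)"

definition irred_mat :: "real mat \<Rightarrow> bool" where
  "irred_mat X \<longleftrightarrow> irred (dim_row X) (\<lambda>i j. X $$ (i, j))"

definition msuminf :: "nat \<Rightarrow> (nat \<Rightarrow> real mat) \<Rightarrow> real mat" where
  "msuminf M F = mat M M (\<lambda>(i, j). \<Sum>k. F k $$ (i, j))"

definition Astar :: "nat \<Rightarrow> (nat \<Rightarrow> real mat) \<Rightarrow> real \<Rightarrow> real mat" where
  "Astar M A z = msuminf M (\<lambda>k. z ^ k \<cdot>\<^sub>m A k)"

definition conv_radius_A :: "nat \<Rightarrow> (nat \<Rightarrow> real mat) \<Rightarrow> ereal" where
  "conv_radius_A M A = (INF ij \<in> {..<M} \<times> {..<M}. conv_radius (\<lambda>k. A k $$ ij))"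

definition delta :: "complex mat \<Rightarrow> complex" where
  "delta X = (let S = {e \<in> spectrum X. cmod e = spectral_radius X \<and> Arg e \<ge> 0}
              in THE e. e \<in> S \<and> (\<forall>u\<in>S. Re u \<le> Re e))"

text \<open>The transition matrix T of the M/G/1-type chain; states are pairs (level, phase),
  state space {(0,j). j < M0} \<union> {(k,j). k \<ge> 1, j < M}.\<close>
definition states :: "nat \<Rightarrow> nat \<Rightarrow> (nat \<times> nat) set" where
  "states M0 M = {(0, j) | j. j < M0} \<union> {(k, j) | k j. 1 \<le> k \<and> j < M}"

fun Tmat :: "(nat \<Rightarrow> real mat) \<Rightarrow> (nat \<Rightarrow> real mat) \<Rightarrow> real mat
              \<Rightarrow> nat \<times> nat \<Rightarrow> nat \<times> nat \<Rightarrow> real" where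
  "Tmat A B C0 (k, i) (l, j) =
     (if k = 0 then B l $$ (i, j)
      else if k = 1 then (if l = 0 then C0 $$ (i, j) else A l $$ (i, j))
      else if k - 1 \<le> l then A (l + 1 - k) $$ (i, j) else 0)"

definition irred_T :: "nat \<Rightarrow> nat \<Rightarrow> (nat \<times> nat \<Rightarrow> nat \<times> nat \<Rightarrow> real) \<Rightarrow> bool" where
  "irred_T M0 M T \<longleftrightarrow>
     (\<forall>s\<in>states M0 M. \<forall>t\<in>states M0 M.
        (s, t) \<in> {(a, b). a \<in> states M0 M \<and> b \<in> states M0 M \<and> T a b > 0}\<^sup>+)"

text \<open>First-passage probabilities: hit M A n l i j is the probability that the chain,
  started at a level k+l (k \<ge> 1, l \<ge> 1) in phase i, enters level k for the first
  time at step n, in phase j. Before that time only the blocks A(m) are used.\<close>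
primrec hit :: "nat \<Rightarrow> (nat \<Rightarrow> real mat) \<Rightarrow> nat \<Rightarrow> nat \<Rightarrow> nat \<Rightarrow> nat \<Rightarrow> real" where
  "hit M A 0 l i j = 0"
| "hit M A (Suc n) l i j =
     (if l = 1 \<and> n = 0 then A 0 $$ (i, j) else 0)
     + (\<Sum>m. \<Sum>i'<M. if 2 \<le> l + m then A m $$ (i, i') * hit M A n (l + m - 1) i' j else 0)"

definition Gmat :: "nat \<Rightarrow> (nat \<Rightarrow> real mat) \<Rightarrow> real mat" where
  "Gmat M A = mat M M (\<lambda>(i, j). \<Sum>n. hit M A n 1 i j)"

definition Umat :: "nat \<Rightarrow> (nat \<Rightarrow> real mat) \<Rightarrow> nat \<Rightarrow> real mat" where
  "Umat M A k = msuminf M (\<lambda>m. A (m + k + 1) * (Gmat M A ^\<^sub>m m))"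

definition Rmat :: "nat \<Rightarrow> (nat \<Rightarrow> real mat) \<Rightarrow> nat \<Rightarrow> real mat" where
  "Rmat M A k = Umat M A k * the (mat_inverse (1\<^sub>m M - Umat M A 0))"

definition Rstar1 :: "nat \<Rightarrow> (nat \<Rightarrow> real mat) \<Rightarrow> real mat" where
  "Rstar1 M A = msuminf M (\<lambda>k. Rmat M A (Suc k))"

end

theory Submission
  imports Defs
begin

lemma sum_pos_iff_nn:
  fixes f :: "'b \<Rightarrow> real"
  assumes "finite I" "\<And>i. i \<in> I \<Longrightarrow> 0 \<le> f i"
  shows "0 < sum f I \<longleftrightarrow> (\<exists>i\<in>I. 0 < f i)"
proof
  assume "0 < sum f I"
  show "\<exists>i\<in>I. 0 < f i"
  proof (rule ccontr)
    assume "\<not> (\<exists>i\<in>I. 0 < f i)"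
    hence "\<And>i. i \<in> I \<Longrightarrow> f i = 0" using assms(2) by force
    hence "sum f I = 0" by simp
    thus False using \<open>0 < sum f I\<close> by simp
  qed
next
  assume "\<exists>i\<in>I. 0 < f i"
  then obtain i where "i \<in> I" "0 < f i" by blast
  thus "0 < sum f I" using assms by (intro sum_pos2) auto
qed

lemma suminf_pos_iff_nn:
  fixes f :: "nat \<Rightarrow> real"
  assumes "summable f" "\<And>i. 0 \<le> f i"
  shows "0 < suminf f \<longleftrightarrow> (\<exists>i. 0 < f i)"
proof
  assume "0 < suminf f"
  show "\<exists>i. 0 < f i"
  proof (rule ccontr)
    assume "\<not> (\<exists>i. 0 < f i)"
    hence "\<And>i. f i = 0" using assms(2) by (metis less_eq_real_def)
    hence "f = (\<lambda>_. 0)" by auto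
    thus False using \<open>0 < suminf f\<close> by simp
  qed
next
  assume "\<exists>i. 0 < f i"
  then obtain i where "0 < f i" by blast
  thus "0 < suminf f" using assms by (intro suminf_pos2) auto
qed

lemma mult_entry:
  fixes X Y :: "'a::comm_semiring_0 mat"
  assumes "X \<in> carrier_mat n n" "Y \<in> carrier_mat n n" "i < n" "j < n"
  shows "(X * Y) $$ (i, j) = (\<Sum>k<n. X $$ (i, k) * Y $$ (k, j))"
  using assms by (simp add: scalar_prod_def atLeast0LessThan)

definition rs :: "nat \<Rightarrow> real mat \<Rightarrow> nat \<Rightarrow> real" where
  "rs n X i = (\<Sum>j<n. X $$ (i, j))"

definition nnsub :: "nat \<Rightarrow> real mat \<Rightarrow> bool" where
  "nnsub n X \<longleftrightarrow> X \<in> carrier_mat n n \<and> (\<forall>i<n. \<forall>j<n. 0 \<le> X $$ (i, j)) \<and> (\<forall>i<n. rs n X i \<le> 1)"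

lemma rs_mult:
  assumes "X \<in> carrier_mat n n" "Y \<in> carrier_mat n n" "i < n"
  shows "rs n (X * Y) i = (\<Sum>k<n. X $$ (i, k) * rs n Y k)"
proof -
  have "rs n (X * Y) i = (\<Sum>j<n. \<Sum>k<n. X $$ (i, k) * Y $$ (k, j))"
    unfolding rs_def using assms by (intro sum.cong refl mult_entry) auto
  also have "\<dots> = (\<Sum>k<n. \<Sum>j<n. X $$ (i, k) * Y $$ (k, j))" by (rule sum.swap)
  also have "\<dots> = (\<Sum>k<n. X $$ (i, k) * rs n Y k)" unfolding rs_def by (simp add: sum_distrib_left)
  finally show ?thesis .
qed

lemma nnsub_mult:
  assumes "nnsub n X" "nnsub n Y"
  shows "nnsub n (X * Y)"
proof -
  have c: "X \<in> carrier_mat n n" "Y \<in> carrier_mat n n" using assms unfolding nnsub_def by auto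
  have nn: "0 \<le> (X * Y) $$ (i, j)" if "i < n" "j < n" for i j
    using assms that unfolding mult_entry[OF c that] nnsub_def by (intro sum_nonneg) auto
  have "rs n (X * Y) i \<le> 1" if i: "i < n" for i
  proof -
    have "rs n (X * Y) i = (\<Sum>k<n. X $$ (i, k) * rs n Y k)" using rs_mult[OF c i] .
    also have "\<dots> \<le> (\<Sum>k<n. X $$ (i, k))"
      using assms i unfolding nnsub_def by (intro sum_mono) (simp add: mult_left_le)
    also have "\<dots> \<le> 1" using assms i unfolding nnsub_def rs_def by auto
    finally show ?thesis .
  qed
  thus ?thesis using nn c unfolding nnsub_def by auto
qed

lemma nnsub_one: "nnsub n (1\<^sub>m n)"
proof -
  have "rs n (1\<^sub>m n) i = 1" if "i < n" for i
  proof -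
    have "rs n (1\<^sub>m n) i = (\<Sum>j<n. if i = j then 1 else 0)" unfolding rs_def using that
      by (intro sum.cong refl) auto
    also have "\<dots> = 1" using that by simp
    finally show ?thesis .
  qed
  thus ?thesis unfolding nnsub_def by auto
qed

lemma nnsub_pow: "nnsub n X \<Longrightarrow> nnsub n (X ^\<^sub>m k)"
proof (induction k)
  case 0
  then show ?case using nnsub_one[of n] unfolding nnsub_def by auto
next
  case (Suc k)
  then show ?case using nnsub_mult by simp
qed

lemma nnsub_entry: "nnsub n X \<Longrightarrow> i < n \<Longrightarrow> j < n \<Longrightarrow> 0 \<le> X $$ (i, j) \<and> X $$ (i, j) \<le> 1"
proof -
  assume a: "nnsub n X" "i < n" "j < n"
  have "X $$ (i, j) \<le> rs n X i" unfolding rs_def using a unfolding nnsub_def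
    by (intro member_le_sum) auto
  thus ?thesis using a unfolding nnsub_def by auto
qed

lemma mult_pos_iff:
  fixes X Y :: "real mat"
  assumes c: "X \<in> carrier_mat n n" "Y \<in> carrier_mat n n" and ij: "i < n" "j < n"
    and nn: "\<And>a b. a < n \<Longrightarrow> b < n \<Longrightarrow> 0 \<le> X $$ (a, b)" "\<And>a b. a < n \<Longrightarrow> b < n \<Longrightarrow> 0 \<le> Y $$ (a, b)"
  shows "0 < (X * Y) $$ (i, j) \<longleftrightarrow> (\<exists>k<n. 0 < X $$ (i, k) \<and> 0 < Y $$ (k, j))"
proof -
  have "0 < (\<Sum>k<n. X $$ (i, k) * Y $$ (k, j)) \<longleftrightarrow> (\<exists>k\<in>{..<n}. 0 < X $$ (i, k) * Y $$ (k, j))"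
    using nn ij by (intro sum_pos_iff_nn) (auto)
  also have "\<dots> \<longleftrightarrow> (\<exists>k<n. 0 < X $$ (i, k) \<and> 0 < Y $$ (k, j))"
  proof
    assume "\<exists>k\<in>{..<n}. 0 < X $$ (i, k) * Y $$ (k, j)"
    then obtain k where k: "k < n" "0 < X $$ (i, k) * Y $$ (k, j)" by auto
    have "0 \<le> X $$ (i, k)" "0 \<le> Y $$ (k, j)" using nn k ij by auto
    hence "0 < X $$ (i, k) \<and> 0 < Y $$ (k, j)" using k(2)
      by (metis less_eq_real_def mult_zero_left mult_zero_right)
    thus "\<exists>k<n. 0 < X $$ (i, k) \<and> 0 < Y $$ (k, j)" using k by auto
  qed (auto intro: mult_pos_pos)
  finally show ?thesis unfolding mult_entry[OF c ij] .
qed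

locale qbd =
  fixes M :: nat and A :: "nat \<Rightarrow> real mat" and \<theta> :: real
  assumes Mpos: "0 < M"
    and nnA: "\<And>k i j. i < M \<Longrightarrow> j < M \<Longrightarrow> 0 \<le> A k $$ (i, j)"
    and sumth: "\<And>i j. i < M \<Longrightarrow> j < M \<Longrightarrow> summable (\<lambda>k. \<theta> ^ k * A k $$ (i, j))"
    and th1: "1 < \<theta>"
    and stoch: "\<And>i. i < M \<Longrightarrow> (\<Sum>j<M. \<Sum>k. A k $$ (i, j)) = 1"
begin

lemma sumA: "i < M \<Longrightarrow> j < M \<Longrightarrow> summable (\<lambda>k. A k $$ (i, j))"
proof -
  assume ij: "i < M" "j < M"
  show ?thesis
  proof (rule summable_comparison_test[OF _ sumth[OF ij]])
    show "\<exists>N. \<forall>n\<ge>N. norm (A n $$ (i, j)) \<le> \<theta> ^ n * A n $$ (i, j)"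
    proof (intro exI[of _ 0] allI impI)
      fix n :: nat
      have "1 \<le> \<theta> ^ n" using th1 by (auto intro!: one_le_power)
      from mult_right_mono[OF this nnA[OF ij]]
      show "norm (A n $$ (i, j)) \<le> \<theta> ^ n * A n $$ (i, j)" using nnA[OF ij] by simp
    qed
  qed
qed

definition arow :: "nat \<Rightarrow> nat \<Rightarrow> real" where
  "arow i m = (\<Sum>i'<M. A m $$ (i, i'))"

lemma arow_sum: "i < M \<Longrightarrow> summable (arow i) \<and> suminf (arow i) = 1"
proof -
  assume i: "i < M"
  have s: "\<And>i'. i' \<in> {..<M} \<Longrightarrow> summable (\<lambda>m. A m $$ (i, i'))" using sumA i by auto
  have "suminf (arow i) = (\<Sum>i'<M. \<Sum>m. A m $$ (i, i'))"
    unfolding arow_def by (rule suminf_sum[OF s])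
  also have "\<dots> = 1" using stoch[OF i] .
  moreover have "summable (arow i)" unfolding arow_def by (intro summable_sum) (use sumA i in auto)
  ultimately show ?thesis by auto
qed

lemma arow_nn: "i < M \<Longrightarrow> 0 \<le> arow i m"
  unfolding arow_def using nnA by (auto intro: sum_nonneg)

lemma entry_le_arow: "i < M \<Longrightarrow> j < M \<Longrightarrow> A m $$ (i,j) \<le> arow i m"
  unfolding arow_def using nnA by (intro member_le_sum) auto


abbreviation "hit' \<equiv> hit M A"

definition hf :: "nat \<Rightarrow> nat \<Rightarrow> nat \<Rightarrow> nat \<Rightarrow> nat \<Rightarrow> real" where
  "hf n l i j m = (\<Sum>i'<M. if 2 \<le> l + m then A m $$ (i, i') * hit' n (l + m - 1) i' j else 0)"

lemma hit_Suc_hf: "hit' (Suc n) l i j = (if l = 1 \<and> n = 0 then A 0 $$ (i, j) else 0) + suminf (hf n l i j)"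
  unfolding hf_def by simp

lemma hf_aux: "0 \<le> a \<Longrightarrow> 0 \<le> h \<and> h \<le> c \<Longrightarrow> a * h \<le> c * (a::real)"
proof -
  assume "0 \<le> a" "0 \<le> h \<and> h \<le> c"
  hence "a * h \<le> a * c" by (intro mult_left_mono) auto
  thus ?thesis by (simp add: mult.commute)
qed

lemma hf_nn:
  assumes i: "i < M" and b: "\<And>l i'. i' < M \<Longrightarrow> 0 \<le> hit' n l i' j"
  shows "0 \<le> hf n l i j m"
  unfolding hf_def using nnA[OF i] b by (intro sum_nonneg) (simp add: mult_nonneg_nonneg)

lemma hf_le:
  assumes i: "i < M" and b: "\<And>l i'. i' < M \<Longrightarrow> 0 \<le> hit' n l i' j \<and> hit' n l i' j \<le> c"
    and c: "0 \<le> c"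
  shows "hf n l i j m \<le> c * arow i m"
proof -
  have "hf n l i j m \<le> (\<Sum>i'<M. c * A m $$ (i, i'))" unfolding hf_def
  proof (rule sum_mono)
    fix i' assume "i' \<in> {..<M}"
    hence i': "i' < M" by simp
    show "(if 2 \<le> l + m then A m $$ (i, i') * hit' n (l + m - 1) i' j else 0) \<le> c * A m $$ (i, i')"
      using hf_aux[OF nnA[OF i i'] b[OF i']] mult_nonneg_nonneg[OF c nnA[OF i i']] by simp
  qed
  also have "\<dots> = c * arow i m" unfolding arow_def by (simp add: sum_distrib_left)
  finally show ?thesis .
qed

lemma summable_bound:
  fixes f g :: "nat \<Rightarrow> real"
  assumes "\<And>m. 0 \<le> f m" "\<And>m. f m \<le> g m" "summable g"
  shows "summable f"
  by (rule summable_comparison_test[OF _ assms(3)]) (use assms in auto)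

lemma hf_summable:
  assumes i: "i < M" and b: "\<And>l i'. i' < M \<Longrightarrow> 0 \<le> hit' n l i' j \<and> hit' n l i' j \<le> c"
    and c: "0 \<le> c"
  shows "summable (hf n l i j)"
proof (rule summable_bound)
  show "0 \<le> hf n l i j m" for m using hf_nn[OF i] b by blast
  show "hf n l i j m \<le> c * arow i m" for m using hf_le[OF i b c] .
  show "summable (\<lambda>m. c * arow i m)" using arow_sum[OF i] by (intro summable_mult) auto
qed

lemma hf_0: "l \<le> 1 \<Longrightarrow> hf n l i j 0 = 0"
  unfolding hf_def by simp

lemma suminf_head_add:
  fixes f :: "nat \<Rightarrow> real"
  assumes "summable f"
  shows "x + suminf f = (\<Sum>m. (if m = 0 then x else 0) + f m)"
proof -
  have "(\<lambda>m. if m = 0 then x else 0) sums x" using sums_single[of 0 "\<lambda>_. x"] by simp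
  from sums_add[OF this summable_sums[OF assms]] show ?thesis by (simp add: sums_iff)
qed

lemma hit_bounds: "i < M \<Longrightarrow> j < M \<Longrightarrow> 0 \<le> hit' n l i j \<and> hit' n l i j \<le> 1"
proof (induction n arbitrary: l i)
  case 0
  then show ?case by simp
next
  case (Suc n)
  have b: "\<And>l i'. i' < M \<Longrightarrow> 0 \<le> hit' n l i' j \<and> hit' n l i' j \<le> 1" using Suc by blast
  have sm: "summable (hf n l i j)" using hf_summable[OF Suc.prems(1) b] by simp
  define c0 where "c0 = (if l = 1 \<and> n = 0 then A 0 $$ (i, j) else 0)"
  have c0: "0 \<le> c0" "c0 \<le> A 0 $$ (i, j)" unfolding c0_def using nnA[OF Suc.prems] by auto
  have eq: "hit' (Suc n) l i j = c0 + suminf (hf n l i j)" unfolding c0_def hit_Suc_hf ..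
  have "0 \<le> suminf (hf n l i j)" using sm hf_nn[OF Suc.prems(1)] b by (intro suminf_nonneg) auto
  hence nn: "0 \<le> hit' (Suc n) l i j" using eq c0 by simp
  define h where "h m = (if m = 0 then c0 else 0) + hf n l i j m" for m
  have "hit' (Suc n) l i j = suminf h" unfolding eq h_def using suminf_head_add[OF sm] .
  also have "\<dots> \<le> suminf (arow i)"
  proof (rule suminf_le)
    show "summable h" unfolding h_def
      using summable_add[OF summable_single[of 0 "\<lambda>_. c0"] sm] by simp
    show "summable (arow i)" using arow_sum[OF Suc.prems(1)] by simp
    show "h m \<le> arow i m" for m
    proof (cases "m = 0")
      case True
      show ?thesis
      proof (cases "l \<le> 1")
        case True
        thus ?thesis using \<open>m = 0\<close> hf_0[OF True] c0 entry_le_arow[OF Suc.prems, of 0] unfolding h_def by simp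
      next
        case False
        hence "c0 = 0" unfolding c0_def by auto
        thus ?thesis using hf_le[OF Suc.prems(1) b, where l=l and m=m] \<open>m = 0\<close> unfolding h_def by simp
      qed
    next
      case False
      thus ?thesis using hf_le[OF Suc.prems(1) b, where l=l and m=m] unfolding h_def by simp
    qed
  qed
  also have "\<dots> = 1" using arow_sum[OF Suc.prems(1)] by simp
  finally show ?case using nn by simp
qed

lemma hf_sum_eq:
  "(\<Sum>j<M. \<Sum>n<N. hf n l i j m) =
   (if 2 \<le> l + m then (\<Sum>i'<M. A m $$ (i, i') * (\<Sum>j<M. \<Sum>n<N. hit' n (l + m - 1) i' j)) else 0)"
proof (cases "2 \<le> l + m")
  case True
  have "(\<Sum>j<M. \<Sum>n<N. hf n l i j m) = (\<Sum>j<M. \<Sum>n<N. \<Sum>i'<M. A m $$ (i, i') * hit' n (l + m - 1) i' j)"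
    unfolding hf_def using True by simp
  also have "\<dots> = (\<Sum>j<M. \<Sum>i'<M. \<Sum>n<N. A m $$ (i, i') * hit' n (l + m - 1) i' j)"
    by (rule sum.cong[OF refl], rule sum.swap)
  also have "\<dots> = (\<Sum>i'<M. \<Sum>j<M. \<Sum>n<N. A m $$ (i, i') * hit' n (l + m - 1) i' j)"
    by (rule sum.swap)
  also have "\<dots> = (\<Sum>i'<M. A m $$ (i, i') * (\<Sum>j<M. \<Sum>n<N. hit' n (l + m - 1) i' j))"
    by (simp add: sum_distrib_left)
  finally show ?thesis using True by simp
next
  case False
  thus ?thesis unfolding hf_def by simp
qed

lemma hit_rowsum: "i < M \<Longrightarrow> (\<Sum>j<M. \<Sum>n<N. hit' n l i j) \<le> 1"
proof (induction N arbitrary: l i)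
  case 0
  then show ?case by simp
next
  case (Suc N)
  have b: "\<And>l i' j. i' < M \<Longrightarrow> j < M \<Longrightarrow> 0 \<le> hit' n l i' j \<and> hit' n l i' j \<le> 1" for n
    using hit_bounds by blast
  define c0 where "c0 (n::nat) j = (if l = 1 \<and> n = 0 then A 0 $$ (i, j) else 0)" for n j
  define h where "h n j m = (if m = 0 then c0 n j else 0) + hf n l i j m" for n j m
  have sm: "summable (hf n l i j)" if "j < M" for n j using hf_summable[OF Suc.prems(1) b[OF _ that]] by simp
  have smh: "summable (h n j)" if "j < M" for n j unfolding h_def
      using summable_add[OF summable_single[of 0 "\<lambda>_. c0 n j"] sm[OF that]] by simp
  have "(\<Sum>j<M. \<Sum>n<Suc N. hit' n l i j) = (\<Sum>j<M. \<Sum>n<N. hit' (Suc n) l i j)"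
    by (rule sum.cong[OF refl], subst sum.lessThan_Suc_shift) simp
  also have "\<dots> = (\<Sum>j<M. \<Sum>n<N. suminf (h n j))"
    unfolding hit_Suc_hf h_def c0_def
    by (intro sum.cong refl suminf_head_add sm) auto
  also have "\<dots> = (\<Sum>j<M. \<Sum>m. \<Sum>n<N. h n j m)"
    by (intro sum.cong refl suminf_sum[symmetric] smh) auto
  also have "\<dots> = (\<Sum>m. \<Sum>j<M. \<Sum>n<N. h n j m)"
    by (intro suminf_sum[symmetric] summable_sum smh) auto
  also have "\<dots> \<le> suminf (arow i)"
  proof (rule suminf_le)
    show "summable (\<lambda>m. \<Sum>j<M. \<Sum>n<N. h n j m)" by (intro summable_sum smh) auto
    show "summable (arow i)" using arow_sum[OF Suc.prems(1)] by simp
    show "(\<Sum>j<M. \<Sum>n<N. h n j m) \<le> arow i m" for m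
    proof (cases "m = 0 \<and> l \<le> 1")
      case True
      have "(\<Sum>j<M. \<Sum>n<N. h n j m) = (\<Sum>j<M. \<Sum>n<N. c0 n j)"
        unfolding h_def using True hf_0 by simp
      also have "\<dots> \<le> (\<Sum>j<M. A 0 $$ (i, j))"
      proof (rule sum_mono)
        fix j assume "j \<in> {..<M}"
        hence j: "j < M" by simp
        have "(\<Sum>n<N. c0 n j) = (\<Sum>n\<in>{..<N} \<inter> {0}. c0 n j)"
          by (rule sum.mono_neutral_right) (auto simp: c0_def)
        also have "\<dots> \<le> A 0 $$ (i, j)" using nnA[OF Suc.prems(1) j] by (cases N) (auto simp: c0_def)
        finally show "(\<Sum>n<N. c0 n j) \<le> A 0 $$ (i, j)" .
      qed
      also have "\<dots> = arow i m" unfolding arow_def using True by simp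
      finally show ?thesis .
    next
      case False
      have "(\<Sum>j<M. \<Sum>n<N. h n j m) = (\<Sum>j<M. \<Sum>n<N. hf n l i j m)"
        unfolding h_def c0_def using False by (intro sum.cong refl) auto
      also have "\<dots> \<le> arow i m"
      proof (cases "2 \<le> l + m")
        case True
        have "(\<Sum>i'<M. A m $$ (i, i') * (\<Sum>j<M. \<Sum>n<N. hit' n (l + m - 1) i' j)) \<le> (\<Sum>i'<M. A m $$ (i, i'))"
          using Suc.IH nnA[OF Suc.prems(1)] by (intro sum_mono) (simp add: mult_left_le)
        thus ?thesis unfolding hf_sum_eq arow_def using True by simp
      next
        case False
        thus ?thesis unfolding hf_sum_eq using arow_nn[OF Suc.prems(1)] by simp
      qed
      finally show ?thesis .
    qed
  qed
  also have "\<dots> = 1" using arow_sum[OF Suc.prems(1)] by simp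
  finally show ?case .
qed

lemma hit_partial: "i < M \<Longrightarrow> j < M \<Longrightarrow> (\<Sum>n<N. hit' n l i j) \<le> 1"
proof -
  assume ij: "i < M" "j < M"
  have "(\<Sum>n<N. hit' n l i j) \<le> (\<Sum>j'<M. \<Sum>n<N. hit' n l i j')"
    using ij hit_bounds by (intro member_le_sum[of j "{..<M}" "\<lambda>j'. \<Sum>n<N. hit' n l i j'"] sum_nonneg) auto
  also have "\<dots> \<le> 1" using hit_rowsum ij by simp
  finally show ?thesis .
qed

lemma hit_summable: "i < M \<Longrightarrow> j < M \<Longrightarrow> summable (\<lambda>n. hit' n l i j)"
  by (rule summableI_nonneg_bounded[where x=1]) (use hit_bounds hit_partial in auto)

abbreviation "G \<equiv> Gmat M A"

lemma G_carrier: "G \<in> carrier_mat M M" unfolding Gmat_def by simp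

lemma G_entry: "i < M \<Longrightarrow> j < M \<Longrightarrow> G $$ (i, j) = (\<Sum>n. hit' n 1 i j)"
  unfolding Gmat_def by simp

lemma G_nnsub: "nnsub M G"
proof -
  have nn: "0 \<le> G $$ (i, j)" if "i < M" "j < M" for i j
    unfolding G_entry[OF that] using hit_summable[OF that] hit_bounds[OF that] by (intro suminf_nonneg) auto
  have "rs M G i \<le> 1" if i: "i < M" for i
  proof -
    have "rs M G i = (\<Sum>j<M. \<Sum>n. hit' n 1 i j)" unfolding rs_def using i G_entry by simp
    also have "\<dots> = (\<Sum>n. \<Sum>j<M. hit' n 1 i j)" using hit_summable i by (intro suminf_sum[symmetric]) auto
    also have "\<dots> \<le> 1"
    proof (rule suminf_le_const)
      show "summable (\<lambda>n. \<Sum>j<M. hit' n 1 i j)" using hit_summable i by (intro summable_sum) auto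
      show "(\<Sum>n<N. \<Sum>j<M. hit' n 1 i j) \<le> 1" for N
      proof -
        have "(\<Sum>n<N. \<Sum>j<M. hit' n 1 i j) = (\<Sum>j<M. \<Sum>n<N. hit' n 1 i j)" by (rule sum.swap)
        thus ?thesis using hit_rowsum[OF i, where N=N and l=1] by simp
      qed
    qed
    finally show ?thesis .
  qed
  thus ?thesis using nn G_carrier unfolding nnsub_def by auto
qed

lemma Gpow_nnsub: "nnsub M (G ^\<^sub>m m)" using nnsub_pow[OF G_nnsub] .

inductive fp :: "nat \<Rightarrow> nat \<Rightarrow> nat \<Rightarrow> nat \<Rightarrow> bool" where
  fp1: "i < M \<Longrightarrow> j < M \<Longrightarrow> 0 < A 0 $$ (i, j) \<Longrightarrow> fp (Suc 0) 1 i j"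
| fp2: "i < M \<Longrightarrow> x < M \<Longrightarrow> 0 < A m $$ (i, x) \<Longrightarrow> 2 \<le> l + m \<Longrightarrow> fp n (l + m - 1) x j
        \<Longrightarrow> fp (Suc n) l i j"

lemma fp_idx: "fp n l i j \<Longrightarrow> i < M \<and> j < M"
  by (induction rule: fp.induct) auto

lemma hit_pos: "i < M \<Longrightarrow> j < M \<Longrightarrow> 0 < hit' n l i j \<longleftrightarrow> fp n l i j"
proof (induction n arbitrary: l i)
  case 0
  then show ?case by (auto elim: fp.cases)
next
  case (Suc n)
  have b: "\<And>l i'. i' < M \<Longrightarrow> 0 \<le> hit' n l i' j \<and> hit' n l i' j \<le> 1" using hit_bounds Suc.prems by blast
  have sm: "summable (hf n l i j)" using hf_summable[OF Suc.prems(1) b] by simp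
  have hnn: "\<And>m. 0 \<le> hf n l i j m" using hf_nn[OF Suc.prems(1)] b by blast
  define c0 where "c0 = (if l = 1 \<and> n = 0 then A 0 $$ (i, j) else 0)"
  have c0: "0 \<le> c0" unfolding c0_def using nnA[OF Suc.prems] by auto
  have eq: "hit' (Suc n) l i j = c0 + suminf (hf n l i j)" unfolding c0_def hit_Suc_hf ..
  have "0 \<le> suminf (hf n l i j)" using sm hnn by (intro suminf_nonneg) auto
  hence "0 < hit' (Suc n) l i j \<longleftrightarrow> 0 < c0 \<or> 0 < suminf (hf n l i j)" unfolding eq using c0 by linarith
  also have "0 < suminf (hf n l i j) \<longleftrightarrow> (\<exists>m. 0 < hf n l i j m)" using suminf_pos_iff_nn[OF sm hnn] .
  also have "(\<exists>m. 0 < hf n l i j m) \<longleftrightarrow> (\<exists>m x. x < M \<and> 2 \<le> l + m \<and> 0 < A m $$ (i, x) \<and> fp n (l + m - 1) x j)"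
  proof -
    have "0 < hf n l i j m \<longleftrightarrow> (\<exists>x. x < M \<and> 2 \<le> l + m \<and> 0 < A m $$ (i, x) \<and> fp n (l + m - 1) x j)" for m
    proof -
      have "0 < hf n l i j m \<longleftrightarrow> (\<exists>x\<in>{..<M}. 0 < (if 2 \<le> l + m then A m $$ (i, x) * hit' n (l + m - 1) x j else 0))"
        unfolding hf_def using nnA[OF Suc.prems(1)] b by (intro sum_pos_iff_nn) auto
      also have "\<dots> \<longleftrightarrow> (\<exists>x. x < M \<and> 2 \<le> l + m \<and> 0 < A m $$ (i, x) \<and> fp n (l + m - 1) x j)"
      proof (intro iffI)
        assume "\<exists>x\<in>{..<M}. 0 < (if 2 \<le> l + m then A m $$ (i, x) * hit' n (l + m - 1) x j else 0)"
        then obtain x where x: "x < M" "2 \<le> l + m" "0 < A m $$ (i, x) * hit' n (l + m - 1) x j"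
          by (auto split: if_splits)
        have "0 \<le> A m $$ (i, x)" "0 \<le> hit' n (l + m - 1) x j" using nnA[OF Suc.prems(1) x(1)] b[OF x(1)] by auto
        hence "0 < A m $$ (i, x)" "0 < hit' n (l + m - 1) x j" using x(3)
          by (metis less_eq_real_def mult_zero_left mult_zero_right)+
        thus "\<exists>x. x < M \<and> 2 \<le> l + m \<and> 0 < A m $$ (i, x) \<and> fp n (l + m - 1) x j"
          using x Suc.IH[OF x(1) Suc.prems(2)] by blast
      next
        assume "\<exists>x. x < M \<and> 2 \<le> l + m \<and> 0 < A m $$ (i, x) \<and> fp n (l + m - 1) x j"
        then obtain x where x: "x < M" "2 \<le> l + m" "0 < A m $$ (i, x)" "fp n (l + m - 1) x j" by blast
        have "0 < hit' n (l + m - 1) x j" using x Suc.IH[OF x(1) Suc.prems(2)] by blast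
        thus "\<exists>x\<in>{..<M}. 0 < (if 2 \<le> l + m then A m $$ (i, x) * hit' n (l + m - 1) x j else 0)"
          using x by (intro bexI[of _ x]) auto
      qed
      finally show ?thesis .
    qed
    thus ?thesis by blast
  qed
  also have "(0 < c0 \<or> (\<exists>m x. x < M \<and> 2 \<le> l + m \<and> 0 < A m $$ (i, x) \<and> fp n (l + m - 1) x j)) \<longleftrightarrow> fp (Suc n) l i j"
  proof
    assume "0 < c0 \<or> (\<exists>m x. x < M \<and> 2 \<le> l + m \<and> 0 < A m $$ (i, x) \<and> fp n (l + m - 1) x j)"
    thus "fp (Suc n) l i j"
    proof
      assume "0 < c0"
      hence "l = 1" "n = 0" "0 < A 0 $$ (i, j)" unfolding c0_def by (auto split: if_splits)
      thus ?thesis using fp1[OF Suc.prems] by simp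
    next
      assume "\<exists>m x. x < M \<and> 2 \<le> l + m \<and> 0 < A m $$ (i, x) \<and> fp n (l + m - 1) x j"
      thus ?thesis using fp2[OF Suc.prems(1)] by blast
    qed
  next
    assume "fp (Suc n) l i j"
    thus "0 < c0 \<or> (\<exists>m x. x < M \<and> 2 \<le> l + m \<and> 0 < A m $$ (i, x) \<and> fp n (l + m - 1) x j)"
      by (cases rule: fp.cases) (auto simp: c0_def)
  qed
  finally show ?case .
qed

definition fpa :: "nat \<Rightarrow> nat \<Rightarrow> nat \<Rightarrow> bool" where
  "fpa l i j \<longleftrightarrow> (\<exists>n. fp n l i j)"

lemma G_pos: "i < M \<Longrightarrow> j < M \<Longrightarrow> 0 < G $$ (i, j) \<longleftrightarrow> fpa 1 i j"
proof -
  assume ij: "i < M" "j < M"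
  have "0 < G $$ (i, j) \<longleftrightarrow> (\<exists>n. 0 < hit' n 1 i j)"
    unfolding G_entry[OF ij] using hit_summable[OF ij] hit_bounds[OF ij] by (intro suminf_pos_iff_nn) auto
  thus ?thesis unfolding fpa_def using hit_pos[OF ij] by simp
qed

lemma fp_join: "fp n a x y \<Longrightarrow> fpa b y z \<Longrightarrow> 1 \<le> b \<Longrightarrow> fpa (a + b) x z"
proof (induction arbitrary: z rule: fp.induct)
  case (fp1 i j)
  then obtain n' where n': "fp n' b j z" unfolding fpa_def by blast
  have "fp (Suc n') (1 + b) i z" using fp2[of i j 0 "1 + b" n' z] fp1 n' by simp
  thus ?case unfolding fpa_def by blast
next
  case (fp2 i x m l n j)
  then obtain n' where n': "fp n' (l + m - 1 + b) x z" unfolding fpa_def by blast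
  have "l + b + m - 1 = l + m - 1 + b" using fp2 by simp
  hence "fp (Suc n') (l + b) i z" using fp.fp2[of i x m "l + b" n' z] fp2 n' by simp
  thus ?case unfolding fpa_def by blast
qed

lemma fpa_join: "fpa a x y \<Longrightarrow> fpa b y z \<Longrightarrow> 1 \<le> b \<Longrightarrow> fpa (a + b) x z"
  unfolding fpa_def[of a] using fp_join by blast

lemma fp_split: "fp n l x z \<Longrightarrow> l = a + b \<Longrightarrow> 1 \<le> a \<Longrightarrow> 1 \<le> b \<Longrightarrow> \<exists>y<M. fpa a x y \<and> fpa b y z"
proof (induction arbitrary: a rule: fp.induct)
  case (fp1 i j)
  then show ?case by simp
next
  case (fp2 i x m l n j)
  show ?case
  proof (cases "2 \<le> a + m")
    case True
    have "l + m - 1 = (a + m - 1) + b" using fp2 True by simp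
    moreover have "1 \<le> a + m - 1" using True by simp
    ultimately have "\<exists>y<M. fpa (a + m - 1) x y \<and> fpa b y j" using fp2.IH fp2.prems(3) by blast
    then obtain y where y: "y < M" "fpa (a + m - 1) x y" "fpa b y j" by blast
    from y(2) obtain n' where "fp n' (a + m - 1) x y" unfolding fpa_def by blast
    hence "fp (Suc n') a i y" using fp.fp2[of i x m a n' y] fp2 True by simp
    thus ?thesis using y unfolding fpa_def by blast
  next
    case False
    hence "a = 1" "m = 0" using fp2 by auto
    hence "fp (Suc 0) 1 i x" using fp1[of i x] fp2 by simp
    moreover have "fp n b x j" using fp2 \<open>a = 1\<close> \<open>m = 0\<close> by simp
    ultimately show ?thesis using fp2 \<open>a = 1\<close> unfolding fpa_def by blast
  qed
qed

lemma fpa_split: "fpa (a + b) x z \<Longrightarrow> 1 \<le> a \<Longrightarrow> 1 \<le> b \<Longrightarrow> \<exists>y<M. fpa a x y \<and> fpa b y z"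
  unfolding fpa_def[of "a+b"] using fp_split by blast

definition fpa0 :: "nat \<Rightarrow> nat \<Rightarrow> nat \<Rightarrow> bool" where
  "fpa0 l i j \<longleftrightarrow> (if l = 0 then i = j else fpa l i j)"

lemma Gpow_pos: "i < M \<Longrightarrow> j < M \<Longrightarrow> 0 < (G ^\<^sub>m m) $$ (i, j) \<longleftrightarrow> fpa0 m i j"
proof (induction m arbitrary: j)
  case 0
  then show ?case unfolding fpa0_def using G_carrier by auto
next
  case (Suc m)
  have c: "G ^\<^sub>m m \<in> carrier_mat M M" using G_carrier by simp
  have "0 < (G ^\<^sub>m Suc m) $$ (i, j) \<longleftrightarrow> (\<exists>y<M. 0 < (G ^\<^sub>m m) $$ (i, y) \<and> 0 < G $$ (y, j))"
    using mult_pos_iff[OF c G_carrier Suc.prems] nnsub_entry[OF Gpow_nnsub] nnsub_entry[OF G_nnsub] by simp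
  also have "\<dots> \<longleftrightarrow> (\<exists>y<M. fpa0 m i y \<and> fpa 1 y j)" using Suc.IH Suc.prems G_pos by auto
  also have "\<dots> \<longleftrightarrow> fpa0 (Suc m) i j"
  proof (cases "m = 0")
    case True
    thus ?thesis unfolding fpa0_def using Suc.prems by auto
  next
    case False
    have "(\<exists>y<M. fpa m i y \<and> fpa 1 y j) \<longleftrightarrow> fpa (m + 1) i j"
      using fpa_join[of m i _ 1 j] fpa_split[of m 1 i j] False by auto
    thus ?thesis unfolding fpa0_def using False by simp
  qed
  finally show ?case .
qed

end


locale qbd2 = qbd +
  assumes dimA: "\<And>k. A k \<in> carrier_mat M M"
begin

abbreviation "U \<equiv> Umat M A"

lemma AG_carrier: "A n * G ^\<^sub>m m \<in> carrier_mat M M"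
  using dimA G_carrier by (intro mult_carrier_mat) auto

lemma AG_entry: "a < M \<Longrightarrow> c < M \<Longrightarrow> (A n * G ^\<^sub>m m) $$ (a, c) = (\<Sum>x<M. A n $$ (a, x) * (G ^\<^sub>m m) $$ (x, c))"
  using mult_entry[OF dimA pow_carrier_mat[OF G_carrier]] by blast

lemma AG_bounds: "a < M \<Longrightarrow> c < M \<Longrightarrow> 0 \<le> (A n * G ^\<^sub>m m) $$ (a, c) \<and> (A n * G ^\<^sub>m m) $$ (a, c) \<le> arow a n"
proof -
  assume ac: "a < M" "c < M"
  have b: "\<And>x. x < M \<Longrightarrow> 0 \<le> (G ^\<^sub>m m) $$ (x, c) \<and> (G ^\<^sub>m m) $$ (x, c) \<le> 1"
    using nnsub_entry[OF Gpow_nnsub] ac by blast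
  have "0 \<le> (\<Sum>x<M. A n $$ (a, x) * (G ^\<^sub>m m) $$ (x, c))"
    using b nnA[OF ac(1)] by (intro sum_nonneg) simp
  moreover have "(\<Sum>x<M. A n $$ (a, x) * (G ^\<^sub>m m) $$ (x, c)) \<le> (\<Sum>x<M. A n $$ (a, x))"
    using b nnA[OF ac(1)] by (intro sum_mono) (simp add: mult_left_le)
  ultimately show ?thesis unfolding AG_entry[OF ac] arow_def by simp
qed

lemma AG_rs: "a < M \<Longrightarrow> rs M (A n * G ^\<^sub>m m) a \<le> arow a n"
proof -
  assume a: "a < M"
  have "rs M (A n * G ^\<^sub>m m) a = (\<Sum>x<M. A n $$ (a, x) * rs M (G ^\<^sub>m m) x)"
    using rs_mult[OF dimA pow_carrier_mat[OF G_carrier] a] .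
  also have "\<dots> \<le> (\<Sum>x<M. A n $$ (a, x))"
    using Gpow_nnsub nnA[OF a] unfolding nnsub_def by (intro sum_mono) (simp add: mult_left_le)
  finally show ?thesis unfolding arow_def .
qed

lemma arow_shift_summable: "a < M \<Longrightarrow> summable (\<lambda>m. arow a (m + k))"
  using arow_sum[of a] summable_ignore_initial_segment[of "arow a" k] by blast

lemma U_summable: "a < M \<Longrightarrow> c < M \<Longrightarrow> summable (\<lambda>m. (A (m + k + 1) * G ^\<^sub>m m) $$ (a, c))"
proof (rule summable_bound[where g = "\<lambda>m. arow a (m + (k + 1))"])
  assume ac: "a < M" "c < M"
  show "summable (\<lambda>m. arow a (m + (k + 1)))" using arow_shift_summable[OF ac(1)] .
  show "0 \<le> (A (m + k + 1) * G ^\<^sub>m m) $$ (a, c)" for m using AG_bounds[OF ac] by blast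
  show "(A (m + k + 1) * G ^\<^sub>m m) $$ (a, c) \<le> arow a (m + (k + 1))" for m
    using AG_bounds[OF ac, of "m + k + 1" m] by (simp add: add.assoc)
qed

lemma U_entry: "a < M \<Longrightarrow> c < M \<Longrightarrow> U k $$ (a, c) = (\<Sum>m. (A (m + k + 1) * G ^\<^sub>m m) $$ (a, c))"
  unfolding Umat_def msuminf_def by simp

lemma U_carrier: "U k \<in> carrier_mat M M" unfolding Umat_def msuminf_def by simp

lemma U_nn: "a < M \<Longrightarrow> c < M \<Longrightarrow> 0 \<le> U k $$ (a, c)"
  unfolding U_entry using U_summable AG_bounds by (intro suminf_nonneg) auto

lemma U_le_tail: "a < M \<Longrightarrow> c < M \<Longrightarrow> U k $$ (a, c) \<le> (\<Sum>m. arow a (m + (k + 1)))"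
proof -
  assume ac: "a < M" "c < M"
  show ?thesis unfolding U_entry[OF ac]
  proof (rule suminf_le)
    show "summable (\<lambda>m. arow a (m + (k + 1)))" using arow_shift_summable[OF ac(1)] .
    show "summable (\<lambda>m. (A (m + k + 1) * G ^\<^sub>m m) $$ (a, c))" using U_summable[OF ac] .
    show "(A (m + k + 1) * G ^\<^sub>m m) $$ (a, c) \<le> arow a (m + (k + 1))" for m
      using AG_bounds[OF ac, of "m + k + 1" m] by (simp add: add.assoc)
  qed
qed

lemma U_pos: "a < M \<Longrightarrow> c < M \<Longrightarrow>
   0 < U k $$ (a, c) \<longleftrightarrow> (\<exists>m x. x < M \<and> 0 < A (m + k + 1) $$ (a, x) \<and> fpa0 m x c)"
proof -
  assume ac: "a < M" "c < M"
  have "0 < U k $$ (a, c) \<longleftrightarrow> (\<exists>m. 0 < (A (m + k + 1) * G ^\<^sub>m m) $$ (a, c))"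
    unfolding U_entry[OF ac] using U_summable[OF ac] AG_bounds[OF ac] by (intro suminf_pos_iff_nn) auto
  also have "\<dots> \<longleftrightarrow> (\<exists>m x. x < M \<and> 0 < A (m + k + 1) $$ (a, x) \<and> fpa0 m x c)"
  proof -
    have "0 < (A n * G ^\<^sub>m m) $$ (a, c) \<longleftrightarrow> (\<exists>x<M. 0 < A n $$ (a, x) \<and> 0 < (G ^\<^sub>m m) $$ (x, c))" for n m
      using mult_pos_iff[OF dimA pow_carrier_mat[OF G_carrier] ac] nnA nnsub_entry[OF Gpow_nnsub] by simp
    also have "\<dots> n m \<longleftrightarrow> (\<exists>x<M. 0 < A n $$ (a, x) \<and> fpa0 m x c)" for n m
      using Gpow_pos[OF _ ac(2)] by blast
    finally show ?thesis by blast
  qed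
  finally show ?thesis .
qed

lemma U_rs: "a < M \<Longrightarrow> rs M (U k) a \<le> (\<Sum>m. arow a (m + (k + 1)))"
proof -
  assume a: "a < M"
  have "rs M (U k) a = (\<Sum>c<M. \<Sum>m. (A (m + k + 1) * G ^\<^sub>m m) $$ (a, c))"
    unfolding rs_def using U_entry a by simp
  also have "\<dots> = (\<Sum>m. \<Sum>c<M. (A (m + k + 1) * G ^\<^sub>m m) $$ (a, c))"
    using U_summable a by (intro suminf_sum[symmetric]) auto
  also have "\<dots> \<le> (\<Sum>m. arow a (m + (k + 1)))"
  proof (rule suminf_le)
    show "summable (\<lambda>m. \<Sum>c<M. (A (m + k + 1) * G ^\<^sub>m m) $$ (a, c))" using U_summable a by (intro summable_sum) auto
    show "summable (\<lambda>m. arow a (m + (k + 1)))" using arow_shift_summable a by blast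
    show "(\<Sum>c<M. (A (m + k + 1) * G ^\<^sub>m m) $$ (a, c)) \<le> arow a (m + (k + 1))" for m
      using AG_rs[OF a, of "m + k + 1" m] unfolding rs_def by (simp add: add.assoc)
  qed
  finally show ?thesis .
qed

lemma U0_rs: "a < M \<Longrightarrow> rs M (U 0) a \<le> 1 - arow a 0"
proof -
  assume a: "a < M"
  have "suminf (arow a) = arow a 0 + (\<Sum>m. arow a (Suc m))"
    using arow_sum[OF a] by (simp add: suminf_split_head)
  thus ?thesis using U_rs[OF a, of 0] arow_sum[OF a] by simp
qed


definition U0rel :: "(nat \<times> nat) set" where
  "U0rel = {(x, y). x < M \<and> y < M \<and> 0 < U 0 $$ (x, y)}"

lemma U0_step: "x < M \<Longrightarrow> y < M \<Longrightarrow> 0 < A (Suc m) $$ (x, z) \<Longrightarrow> z < M \<Longrightarrow> fpa0 m z y \<Longrightarrow> (x, y) \<in> U0rel"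
  unfolding U0rel_def using U_pos[of x y 0] by auto

lemma U0_A1: "x < M \<Longrightarrow> y < M \<Longrightarrow> 0 < A 1 $$ (x, y) \<Longrightarrow> (x, y) \<in> U0rel"
  using U0_step[of x y 0 y] unfolding fpa0_def by simp

lemma fp_deficient:
  "fp n l i b \<Longrightarrow> 1 \<le> l \<Longrightarrow> \<exists>y q. fpa0 (l - 1) i y \<and> (y, q) \<in> U0rel\<^sup>* \<and> 0 < A 0 $$ (q, b)"
proof (induction rule: fp.induct)
  case (fp1 i j)
  then show ?case unfolding fpa0_def by auto
next
  case (fp2 i x m l n j)
  have "1 \<le> l + m - 1" using fp2 by simp
  with fp2.IH obtain y q where yq: "fpa0 (l + m - 1 - 1) x y" "(y, q) \<in> U0rel\<^sup>*" "0 < A 0 $$ (q, j)" by blast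
  have y: "y < M"
  proof (cases "l + m - 1 - 1 = 0")
    case True thus ?thesis using yq fp2 unfolding fpa0_def by auto
  next
    case False thus ?thesis using yq fp2 fp_idx unfolding fpa0_def fpa_def by auto
  qed
  show ?case
  proof (cases "l = 1")
    case True
    hence "m \<ge> 1" using fp2 by simp
    then obtain m' where m': "m = Suc m'" by (cases m) auto
    have "(i, y) \<in> U0rel" using U0_step[of i y m' x] fp2 y yq m' True by simp
    hence "(i, q) \<in> U0rel\<^sup>*" using yq by auto
    thus ?thesis using yq True unfolding fpa0_def by auto
  next
    case False
    hence l2: "l \<ge> 2" using fp2 by simp
    have "fpa (l - 1) i y"
    proof (cases "l = 2 \<and> m = 0")
      case True
      hence "x = y" using yq unfolding fpa0_def by simp
      thus ?thesis using fp1[of i x] fp2 True unfolding fpa_def by auto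
    next
      case False
      hence "fpa (l + m - 1 - 1) x y" using yq l2 unfolding fpa0_def by (auto split: if_splits)
      moreover have "l + m - 1 - 1 = l - 1 + m - 1" using l2 by simp
      ultimately obtain n' where "fp n' (l - 1 + m - 1) x y" unfolding fpa_def by auto
      have "2 \<le> l - 1 + m" using False l2 by auto
      hence "fp (Suc n') (l - 1) i y" using fp.fp2[of i x m "l - 1" n' y] fp2 \<open>fp n' (l - 1 + m - 1) x y\<close> by simp
      thus ?thesis unfolding fpa_def by blast
    qed
    thus ?thesis using yq l2 unfolding fpa0_def by auto
  qed
qed

lemma U0rel_fp: "(c, q) \<in> U0rel\<^sup>* \<Longrightarrow> q < M \<Longrightarrow> q' < M \<Longrightarrow> 0 < A 0 $$ (q, q') \<Longrightarrow> fpa 1 c q'"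
proof (induction rule: converse_rtrancl_induct)
  case base
  then show ?case using fp1 unfolding fpa_def by blast
next
  case (step c d)
  hence cd: "c < M" "d < M" "0 < U 0 $$ (c, d)" unfolding U0rel_def by auto
  then obtain m x where mx: "x < M" "0 < A (m + 0 + 1) $$ (c, x)" "fpa0 m x d" using U_pos by blast
  have fd: "fpa 1 d q'" using step by blast
  have "fpa (m + 1) x q'"
  proof (cases "m = 0")
    case True thus ?thesis using mx fd unfolding fpa0_def by simp
  next
    case False thus ?thesis using mx fd fpa_join[of m x d 1 q'] unfolding fpa0_def by simp
  qed
  then obtain n where "fp n (1 + Suc m - 1) x q'" unfolding fpa_def by auto
  hence "fp (Suc n) 1 c q'" using fp2[of c x "Suc m" 1 n q'] cd mx by simp
  thus ?case unfolding fpa_def by blast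
qed


end

lemma pow_add_mat: "X \<in> carrier_mat n n \<Longrightarrow> X ^\<^sub>m (s + t) = X ^\<^sub>m s * X ^\<^sub>m t"
proof (induction t)
  case 0
  then show ?case by simp
next
  case (Suc t)
  have "X ^\<^sub>m (s + Suc t) = (X ^\<^sub>m s * X ^\<^sub>m t) * X" using Suc by simp
  also have "\<dots> = X ^\<^sub>m s * (X ^\<^sub>m t * X)" using Suc.prems by (intro assoc_mult_mat) auto
  finally show ?case by simp
qed

lemma sum_div_block:
  fixes g :: "nat \<Rightarrow> real"
  assumes T: "0 < T"
  shows "(\<Sum>t<T * J. g (t div T)) = real T * (\<Sum>j<J. g j)"
proof (induction J)
  case 0
  then show ?case by simp
next
  case (Suc J)
  have "(\<Sum>t<T * Suc J. g (t div T)) = (\<Sum>t<T * J + T. g (t div T))" by (simp add: algebra_simps)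
  also have "\<dots> = (\<Sum>t<T * J. g (t div T)) + (\<Sum>t\<in>{T * J..<T * J + T}. g (t div T))"
    unfolding atLeast0LessThan[symmetric] by (rule sum.atLeastLessThan_concat[symmetric]) auto
  also have "(\<Sum>t\<in>{T * J..<T * J + T}. g (t div T)) = (\<Sum>t\<in>{T * J..<T * J + T}. g J)"
  proof (rule sum.cong[OF refl])
    fix t assume "t \<in> {T * J..<T * J + T}"
    hence "t div T = J" using T by (auto intro!: div_nat_eqI simp: algebra_simps)
    thus "g (t div T) = g J" by simp
  qed
  also have "\<dots> = real T * g J" by simp
  finally show ?case using Suc by (simp add: algebra_simps)
qed

locale qbd3 = qbd2 +
  assumes down: "\<And>i. i < M \<Longrightarrow> \<exists>b. fpa 1 i b"
begin

abbreviation "Q \<equiv> U 0"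

lemma Q_nnsub: "nnsub M Q"
  unfolding nnsub_def using U_carrier U_nn U0_rs arow_nn by (smt (verit))

lemma relpow_pos: "(a, q) \<in> U0rel ^^ t \<Longrightarrow> a < M \<Longrightarrow> q < M \<Longrightarrow> 0 < (Q ^\<^sub>m t) $$ (a, q)"
proof (induction t arbitrary: q)
  case 0
  have "dim_row Q = M" using U_carrier[of 0] by auto
  then show ?case using 0 by simp
next
  case (Suc t)
  then obtain y where y: "(a, y) \<in> U0rel ^^ t" "(y, q) \<in> U0rel" by auto
  hence yM: "y < M" "0 < Q $$ (y, q)" unfolding U0rel_def by auto
  have "0 < (Q ^\<^sub>m t) $$ (a, y)" using Suc.IH[OF y(1) Suc.prems(2) yM(1)] .
  thus ?case using mult_pos_iff[OF pow_carrier_mat[OF U_carrier] U_carrier Suc.prems(2,3)]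
      nnsub_entry[OF nnsub_pow[OF Q_nnsub]] nnsub_entry[OF Q_nnsub] yM by auto
qed

lemma rs_pow_mono: "a < M \<Longrightarrow> rs M (Q ^\<^sub>m (s + d)) a \<le> rs M (Q ^\<^sub>m s) a"
proof (induction d)
  case 0
  then show ?case by simp
next
  case (Suc d)
  have "rs M (Q ^\<^sub>m (s + Suc d)) a = (\<Sum>k<M. (Q ^\<^sub>m (s + d)) $$ (a, k) * rs M Q k)"
    using rs_mult[OF pow_carrier_mat[OF U_carrier] U_carrier Suc.prems] by simp
  also have "\<dots> \<le> (\<Sum>k<M. (Q ^\<^sub>m (s + d)) $$ (a, k))"
    using nnsub_entry[OF nnsub_pow[OF Q_nnsub]] Q_nnsub Suc.prems unfolding nnsub_def
    by (intro sum_mono) (simp add: mult_left_le)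
  also have "\<dots> = rs M (Q ^\<^sub>m (s + d)) a" unfolding rs_def ..
  finally show ?case using Suc by simp
qed

lemma deficient_rs: "a < M \<Longrightarrow> \<exists>t. rs M (Q ^\<^sub>m Suc t) a < 1"
proof -
  assume a: "a < M"
  obtain b where "fpa 1 a b" using down[OF a] by blast
  then obtain n where "fp n 1 a b" unfolding fpa_def by blast
  from fp_deficient[OF this] obtain y q where yq: "fpa0 0 a y" "(y, q) \<in> U0rel\<^sup>*" "0 < A 0 $$ (q, b)" by auto
  have "y = a" using yq unfolding fpa0_def by simp
  have qb: "q < M" "b < M" using fp_idx \<open>fp n 1 a b\<close> yq(2) \<open>y = a\<close> a unfolding U0rel_def
    by (auto elim: rtranclE)
  from yq(2) obtain t where "(a, q) \<in> U0rel ^^ t" using \<open>y = a\<close> rtrancl_power by blast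
  hence pos: "0 < (Q ^\<^sub>m t) $$ (a, q)" using relpow_pos a qb by blast
  have def: "0 < arow q 0" using yq(3) entry_le_arow[OF qb, of 0] by simp
  have nnP: "\<And>k. k < M \<Longrightarrow> 0 \<le> (Q ^\<^sub>m t) $$ (a, k)" using nnsub_entry[OF nnsub_pow[OF Q_nnsub]] a by blast
  have "rs M (Q ^\<^sub>m Suc t) a = (\<Sum>k<M. (Q ^\<^sub>m t) $$ (a, k) * rs M Q k)"
    using rs_mult[OF pow_carrier_mat[OF U_carrier] U_carrier a] by simp
  also have "\<dots> \<le> (\<Sum>k<M. (Q ^\<^sub>m t) $$ (a, k) * (1 - arow k 0))"
    using nnP U0_rs by (intro sum_mono mult_left_mono) auto
  also have "\<dots> = (\<Sum>k<M. (Q ^\<^sub>m t) $$ (a, k)) - (\<Sum>k<M. (Q ^\<^sub>m t) $$ (a, k) * arow k 0)"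
    by (simp add: algebra_simps sum_subtractf)
  finally have r: "rs M (Q ^\<^sub>m Suc t) a \<le> (\<Sum>k<M. (Q ^\<^sub>m t) $$ (a, k)) - (\<Sum>k<M. (Q ^\<^sub>m t) $$ (a, k) * arow k 0)" .
  have s1: "(\<Sum>k<M. (Q ^\<^sub>m t) $$ (a, k)) \<le> 1" using nnsub_pow[OF Q_nnsub] a unfolding nnsub_def rs_def by auto
  have s2: "(Q ^\<^sub>m t) $$ (a, q) * arow q 0 \<le> (\<Sum>k<M. (Q ^\<^sub>m t) $$ (a, k) * arow k 0)"
    using qb nnP arow_nn by (intro member_le_sum[of q "{..<M}" "\<lambda>k. (Q ^\<^sub>m t) $$ (a, k) * arow k 0"]) auto
  have "0 < (Q ^\<^sub>m t) $$ (a, q) * arow q 0" using pos def by simp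
  hence "rs M (Q ^\<^sub>m Suc t) a < 1" using r s1 s2 by linarith
  thus ?thesis by blast
qed


lemma T0_ex: "\<exists>T. 0 < T \<and> (\<forall>a<M. rs M (Q ^\<^sub>m T) a < 1)"
proof -
  define tf where "tf a = (SOME t. rs M (Q ^\<^sub>m Suc t) a < 1)" for a
  have tf: "a < M \<Longrightarrow> rs M (Q ^\<^sub>m Suc (tf a)) a < 1" for a
    unfolding tf_def using deficient_rs by (rule someI_ex)
  define T where "T = Suc (Max (tf ` {..<M}))"
  have "rs M (Q ^\<^sub>m T) a < 1" if a: "a < M" for a
  proof -
    have "tf a \<le> Max (tf ` {..<M})" using a by (intro Max_ge) auto
    then obtain d where "T = Suc (tf a) + d" unfolding T_def using le_Suc_ex by fastforce
    thus ?thesis using rs_pow_mono[OF a, of "Suc (tf a)" d] tf[OF a] by simp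
  qed
  thus ?thesis unfolding T_def by blast
qed

definition "T0 = (SOME T. 0 < T \<and> (\<forall>a<M. rs M (Q ^\<^sub>m T) a < 1))"

lemma T0: "0 < T0" "a < M \<Longrightarrow> rs M (Q ^\<^sub>m T0) a < 1"
  using someI_ex[OF T0_ex] unfolding T0_def[symmetric] by auto

definition "dl = Max (rs M (Q ^\<^sub>m T0) ` {..<M})"

lemma dl: "dl < 1" "0 \<le> dl" "a < M \<Longrightarrow> rs M (Q ^\<^sub>m T0) a \<le> dl"
proof -
  have ne: "rs M (Q ^\<^sub>m T0) ` {..<M} \<noteq> {}" using Mpos by auto
  show "dl < 1" unfolding dl_def using T0(2) ne by (subst Max_less_iff) auto
  show "a < M \<Longrightarrow> rs M (Q ^\<^sub>m T0) a \<le> dl" unfolding dl_def by (intro Max_ge) auto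
  have "0 \<le> rs M (Q ^\<^sub>m T0) 0" unfolding rs_def using nnsub_entry[OF nnsub_pow[OF Q_nnsub]] Mpos
    by (intro sum_nonneg) auto
  moreover have "rs M (Q ^\<^sub>m T0) 0 \<le> dl" unfolding dl_def using Mpos by (intro Max_ge) auto
  ultimately show "0 \<le> dl" by simp
qed

lemma Qpow_nn: "i < M \<Longrightarrow> j < M \<Longrightarrow> 0 \<le> (Q ^\<^sub>m t) $$ (i, j)"
  using nnsub_entry[OF nnsub_pow[OF Q_nnsub]] by blast

lemma geom: "a < M \<Longrightarrow> rs M (Q ^\<^sub>m t) a \<le> dl ^ (t div T0)"
proof (induction t arbitrary: a rule: less_induct)
  case (less t)
  show ?case
  proof (cases "t < T0")
    case True
    thus ?thesis using nnsub_pow[OF Q_nnsub] less.prems unfolding nnsub_def by simp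
  next
    case False
    define s where "s = t - T0"
    have t: "t = s + T0" using False unfolding s_def by simp
    have "rs M (Q ^\<^sub>m t) a = (\<Sum>k<M. (Q ^\<^sub>m s) $$ (a, k) * rs M (Q ^\<^sub>m T0) k)"
      unfolding t pow_add_mat[OF U_carrier] using rs_mult[OF pow_carrier_mat[OF U_carrier] pow_carrier_mat[OF U_carrier] less.prems] .
    also have "\<dots> \<le> (\<Sum>k<M. (Q ^\<^sub>m s) $$ (a, k) * dl)"
      using Qpow_nn less.prems dl(3) by (intro sum_mono mult_left_mono) auto
    also have "\<dots> = rs M (Q ^\<^sub>m s) a * dl" unfolding rs_def by (simp add: sum_distrib_right)
    also have "\<dots> \<le> dl ^ (s div T0) * dl"
      using less.IH[of s a] less.prems T0(1) dl(2) t by (intro mult_right_mono) auto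
    also have "\<dots> = dl ^ (t div T0)" using T0(1) unfolding t by simp
    finally show ?thesis .
  qed
qed

lemma Qpow_le: "i < M \<Longrightarrow> j < M \<Longrightarrow> (Q ^\<^sub>m t) $$ (i, j) \<le> dl ^ (t div T0)"
proof -
  assume ij: "i < M" "j < M"
  have "(Q ^\<^sub>m t) $$ (i, j) \<le> rs M (Q ^\<^sub>m t) i" unfolding rs_def
    using Qpow_nn ij by (intro member_le_sum) auto
  thus ?thesis using geom[OF ij(1), of t] by linarith
qed

lemma Qpow_summable: "i < M \<Longrightarrow> j < M \<Longrightarrow> summable (\<lambda>t. (Q ^\<^sub>m t) $$ (i, j))"
proof (rule summableI_nonneg_bounded[where x = "real T0 / (1 - dl)"])
  assume ij: "i < M" "j < M"
  show "0 \<le> (Q ^\<^sub>m t) $$ (i, j)" for t using Qpow_nn ij .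
  show "sum (\<lambda>t. (Q ^\<^sub>m t) $$ (i, j)) {..<N} \<le> real T0 / (1 - dl)" for N
  proof -
    have "sum (\<lambda>t. (Q ^\<^sub>m t) $$ (i, j)) {..<N} \<le> sum (\<lambda>t. (Q ^\<^sub>m t) $$ (i, j)) {..<T0 * N}"
      using T0(1) Qpow_nn ij by (intro sum_mono2) auto
    also have "\<dots> \<le> (\<Sum>t<T0 * N. dl ^ (t div T0))" using Qpow_le ij by (intro sum_mono) auto
    also have "\<dots> = real T0 * (\<Sum>t<N. dl ^ t)" using sum_div_block[OF T0(1)] .
    also have "\<dots> \<le> real T0 * (1 / (1 - dl))"
    proof (intro mult_left_mono)
      have "(\<Sum>t<N. dl ^ t) \<le> (\<Sum>t. dl ^ t)"
        using dl by (intro sum_le_suminf summable_geometric) auto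
      thus "(\<Sum>t<N. dl ^ t) \<le> 1 / (1 - dl)" using suminf_geometric[of dl] dl by simp
    qed auto
    finally show ?thesis by simp
  qed
qed


definition "Nm = mat M M (\<lambda>(i, j). \<Sum>t. (Q ^\<^sub>m t) $$ (i, j))"

lemma Nm_carrier: "Nm \<in> carrier_mat M M" unfolding Nm_def by simp

lemma Nm_entry: "i < M \<Longrightarrow> j < M \<Longrightarrow> Nm $$ (i, j) = (\<Sum>t. (Q ^\<^sub>m t) $$ (i, j))"
  unfolding Nm_def by simp

lemma Q_comm: "Q * Q ^\<^sub>m t = Q ^\<^sub>m Suc t"
proof -
  have "Q ^\<^sub>m (1 + t) = Q ^\<^sub>m 1 * Q ^\<^sub>m t" by (rule pow_add_mat[OF U_carrier])
  moreover have "Q ^\<^sub>m 1 = Q" using U_carrier[of 0] by simp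
  ultimately show ?thesis by simp
qed

lemma Nm_shift: "i < M \<Longrightarrow> j < M \<Longrightarrow> Nm $$ (i, j) = (1\<^sub>m M) $$ (i, j) + (\<Sum>t. (Q ^\<^sub>m Suc t) $$ (i, j))"
proof -
  assume ij: "i < M" "j < M"
  have "Nm $$ (i, j) = (Q ^\<^sub>m 0) $$ (i, j) + (\<Sum>t. (Q ^\<^sub>m Suc t) $$ (i, j))"
    unfolding Nm_entry[OF ij] using suminf_split_head[OF Qpow_summable[OF ij]] by simp
  moreover have "Q ^\<^sub>m 0 = 1\<^sub>m M" using U_carrier[of 0] by simp
  ultimately show ?thesis by simp
qed

lemma Q_Nm: "i < M \<Longrightarrow> j < M \<Longrightarrow> (Q * Nm) $$ (i, j) = (\<Sum>t. (Q ^\<^sub>m Suc t) $$ (i, j))"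
proof -
  assume ij: "i < M" "j < M"
  have "(Q * Nm) $$ (i, j) = (\<Sum>k<M. Q $$ (i, k) * (\<Sum>t. (Q ^\<^sub>m t) $$ (k, j)))"
    using mult_entry[OF U_carrier Nm_carrier ij] Nm_entry ij by simp
  also have "\<dots> = (\<Sum>k<M. \<Sum>t. Q $$ (i, k) * (Q ^\<^sub>m t) $$ (k, j))"
    using Qpow_summable ij by (intro sum.cong refl suminf_mult[symmetric]) auto
  also have "\<dots> = (\<Sum>t. \<Sum>k<M. Q $$ (i, k) * (Q ^\<^sub>m t) $$ (k, j))"
    using Qpow_summable ij by (intro suminf_sum[symmetric] summable_mult) auto
  also have "\<dots> = (\<Sum>t. (Q * Q ^\<^sub>m t) $$ (i, j))"
    using mult_entry[OF U_carrier pow_carrier_mat[OF U_carrier] ij] by simp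
  finally show ?thesis unfolding Q_comm .
qed

lemma Nm_Q: "i < M \<Longrightarrow> j < M \<Longrightarrow> (Nm * Q) $$ (i, j) = (\<Sum>t. (Q ^\<^sub>m Suc t) $$ (i, j))"
proof -
  assume ij: "i < M" "j < M"
  have "(Nm * Q) $$ (i, j) = (\<Sum>k<M. (\<Sum>t. (Q ^\<^sub>m t) $$ (i, k)) * Q $$ (k, j))"
    using mult_entry[OF Nm_carrier U_carrier ij] Nm_entry ij by simp
  also have "\<dots> = (\<Sum>k<M. \<Sum>t. (Q ^\<^sub>m t) $$ (i, k) * Q $$ (k, j))"
    using Qpow_summable ij by (intro sum.cong refl suminf_mult2) auto
  also have "\<dots> = (\<Sum>t. \<Sum>k<M. (Q ^\<^sub>m t) $$ (i, k) * Q $$ (k, j))"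
    using Qpow_summable ij by (intro suminf_sum[symmetric] summable_mult2) auto
  also have "\<dots> = (\<Sum>t. (Q ^\<^sub>m t * Q) $$ (i, j))"
    using mult_entry[OF pow_carrier_mat[OF U_carrier] U_carrier ij] by simp
  finally show ?thesis by simp
qed

lemma Nm_inv: "(1\<^sub>m M - Q) * Nm = 1\<^sub>m M" "Nm * (1\<^sub>m M - Q) = 1\<^sub>m M"
proof -
  have c1: "1\<^sub>m M \<in> carrier_mat M M" by simp
  have "(1\<^sub>m M - Q) * Nm = Nm - Q * Nm"
    using minus_mult_distrib_mat[OF c1 U_carrier Nm_carrier] Nm_carrier by simp
  also have "\<dots> = 1\<^sub>m M"
  proof (rule eq_matI)
    fix i j assume "i < dim_row (1\<^sub>m M :: real mat)" "j < dim_col (1\<^sub>m M :: real mat)"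
    hence ij: "i < M" "j < M" by auto
    show "(Nm - Q * Nm) $$ (i, j) = 1\<^sub>m M $$ (i, j)"
      using Nm_shift[OF ij] Q_Nm[OF ij] ij Nm_carrier U_carrier[of 0] by simp
  qed (use Nm_carrier U_carrier[of 0] in auto)
  finally show "(1\<^sub>m M - Q) * Nm = 1\<^sub>m M" .
  have "Nm * (1\<^sub>m M - Q) = Nm - Nm * Q"
    using mult_minus_distrib_mat[OF Nm_carrier c1 U_carrier] Nm_carrier by simp
  also have "\<dots> = 1\<^sub>m M"
  proof (rule eq_matI)
    fix i j assume "i < dim_row (1\<^sub>m M :: real mat)" "j < dim_col (1\<^sub>m M :: real mat)"
    hence ij: "i < M" "j < M" by auto
    show "(Nm - Nm * Q) $$ (i, j) = 1\<^sub>m M $$ (i, j)"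
      using Nm_shift[OF ij] Nm_Q[OF ij] ij Nm_carrier U_carrier[of 0] by simp
  qed (use Nm_carrier U_carrier[of 0] in auto)
  finally show "Nm * (1\<^sub>m M - Q) = 1\<^sub>m M" .
qed

lemma mat_inverse_Nm: "the (mat_inverse (1\<^sub>m M - Q)) = Nm"
proof -
  have c: "1\<^sub>m M - Q \<in> carrier_mat M M" by (rule minus_carrier_mat[OF U_carrier])
  have "1\<^sub>m M - Q \<in> Units (ring_mat TYPE(real) M ())"
    unfolding Units_def ring_mat_def using c Nm_carrier Nm_inv by auto
  hence "mat_inverse (1\<^sub>m M - Q) \<noteq> None" using mat_inverse(1)[OF c, where b="()"] by blast
  then obtain B where B: "mat_inverse (1\<^sub>m M - Q) = Some B" by blast
  from mat_inverse(2)[OF c B] have Bi: "B * (1\<^sub>m M - Q) = 1\<^sub>m M" "B \<in> carrier_mat M M" by auto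
  have "B = B * ((1\<^sub>m M - Q) * Nm)" using Nm_inv Bi by simp
  also have "\<dots> = (B * (1\<^sub>m M - Q)) * Nm" by (rule assoc_mult_mat[OF Bi(2) c Nm_carrier, symmetric])
  also have "\<dots> = Nm" using Bi Nm_carrier by simp
  finally show ?thesis using B by simp
qed

lemma Nm_nn: "i < M \<Longrightarrow> j < M \<Longrightarrow> 0 \<le> Nm $$ (i, j)"
  unfolding Nm_entry using Qpow_summable Qpow_nn by (intro suminf_nonneg) auto

lemma Nm_pos: "i < M \<Longrightarrow> j < M \<Longrightarrow> 0 < Nm $$ (i, j) \<longleftrightarrow> (i, j) \<in> U0rel\<^sup>*"
proof -
  assume ij: "i < M" "j < M"
  have "0 < Nm $$ (i, j) \<longleftrightarrow> (\<exists>t. 0 < (Q ^\<^sub>m t) $$ (i, j))"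
    unfolding Nm_entry[OF ij] using Qpow_summable[OF ij] Qpow_nn[OF ij] by (intro suminf_pos_iff_nn) auto
  also have "\<dots> \<longleftrightarrow> (i, j) \<in> U0rel\<^sup>*"
  proof
    assume "\<exists>t. 0 < (Q ^\<^sub>m t) $$ (i, j)"
    then obtain t where "0 < (Q ^\<^sub>m t) $$ (i, j)" by blast
    thus "(i, j) \<in> U0rel\<^sup>*" using ij
    proof (induction t arbitrary: j)
      case 0
      then show ?case using U_carrier[of 0] by (auto split: if_splits)
    next
      case (Suc t)
      hence "\<exists>y<M. 0 < (Q ^\<^sub>m t) $$ (i, y) \<and> 0 < Q $$ (y, j)"
        using mult_pos_iff[OF pow_carrier_mat[OF U_carrier] U_carrier Suc.prems(2,3)]
          Qpow_nn U_nn by simp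
      then obtain y where y: "y < M" "0 < (Q ^\<^sub>m t) $$ (i, y)" "0 < Q $$ (y, j)" by blast
      hence "(i, y) \<in> U0rel\<^sup>*" using Suc.IH Suc.prems by blast
      moreover have "(y, j) \<in> U0rel" using y Suc.prems unfolding U0rel_def by auto
      ultimately show ?case by auto
    qed
  next
    assume "(i, j) \<in> U0rel\<^sup>*"
    then obtain t where "(i, j) \<in> U0rel ^^ t" using rtrancl_power by blast
    thus "\<exists>t. 0 < (Q ^\<^sub>m t) $$ (i, j)" using relpow_pos ij by blast
  qed
  finally show ?thesis .
qed


definition "tlA a n = (\<Sum>m. arow a (m + n))"

lemma th_arow_summable: "a < M \<Longrightarrow> summable (\<lambda>m. \<theta> ^ m * arow a m)"
proof -
  assume a: "a < M"
  have "(\<lambda>m. \<theta> ^ m * arow a m) = (\<lambda>m. \<Sum>i'<M. \<theta> ^ m * A m $$ (a, i'))"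
    unfolding arow_def by (simp add: sum_distrib_left)
  moreover have "summable (\<lambda>m. \<Sum>i'<M. \<theta> ^ m * A m $$ (a, i'))" using sumth a by (intro summable_sum) auto
  ultimately show ?thesis by simp
qed

lemma tl_le: "a < M \<Longrightarrow> tlA a n \<le> (\<Sum>m. \<theta> ^ m * arow a m) / \<theta> ^ n"
proof -
  assume a: "a < M"
  define C where "C = (\<Sum>m. \<theta> ^ m * arow a m)"
  have th0: "0 < \<theta>" using th1 by simp
  have s: "summable (\<lambda>m. \<theta> ^ (m + n) * arow a (m + n))"
    using th_arow_summable[OF a] summable_ignore_initial_segment by blast
  have "tlA a n \<le> (\<Sum>m. \<theta> ^ m * arow a (m + n))"
    unfolding tlA_def
  proof (rule suminf_le)
    show "summable (\<lambda>m. arow a (m + n))" using arow_shift_summable[OF a] .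
    show "summable (\<lambda>m. \<theta> ^ m * arow a (m + n))"
    proof -
      have "(\<lambda>m. \<theta> ^ m * arow a (m + n)) = (\<lambda>m. (\<theta> ^ (m + n) * arow a (m + n)) / \<theta> ^ n)"
        using th0 by (auto simp: power_add)
      show ?thesis unfolding \<open>(\<lambda>m. \<theta> ^ m * arow a (m + n)) = _\<close> by (rule summable_divide[OF s])
    qed
    show "arow a (m + n) \<le> \<theta> ^ m * arow a (m + n)" for m
    proof -
      have "1 \<le> \<theta> ^ m" using th1 by (simp add: one_le_power)
      from mult_right_mono[OF this arow_nn[OF a]] show ?thesis by simp
    qed
  qed
  also have "\<dots> = (\<Sum>m. \<theta> ^ (m + n) * arow a (m + n)) / \<theta> ^ n"
  proof -
    have "(\<lambda>m. \<theta> ^ m * arow a (m + n)) = (\<lambda>m. (\<theta> ^ (m + n) * arow a (m + n)) / \<theta> ^ n)"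
      using th0 by (auto simp: power_add)
    thus ?thesis using suminf_divide[OF s] by simp
  qed
  also have "(\<Sum>m. \<theta> ^ (m + n) * arow a (m + n)) \<le> C"
  proof -
    have "C = (\<Sum>m. \<theta> ^ (m + n) * arow a (m + n)) + (\<Sum>m<n. \<theta> ^ m * arow a m)"
      unfolding C_def using suminf_split_initial_segment[OF th_arow_summable[OF a]] by simp
    moreover have "0 \<le> (\<Sum>m<n. \<theta> ^ m * arow a m)" using arow_nn[OF a] th0 by (intro sum_nonneg) auto
    ultimately show ?thesis by simp
  qed
  hence "(\<Sum>m. \<theta> ^ (m + n) * arow a (m + n)) / \<theta> ^ n \<le> C / \<theta> ^ n" using th0 by (intro divide_right_mono) auto
  finally show ?thesis unfolding C_def .
qed

lemma tl_summable: "a < M \<Longrightarrow> summable (\<lambda>k. tlA a (k + j))"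
proof -
  assume a: "a < M"
  define C where "C = (\<Sum>m. \<theta> ^ m * arow a m)"
  have th0: "0 < \<theta>" using th1 by simp
  have nn: "0 \<le> tlA a n" for n unfolding tlA_def using arow_shift_summable[OF a] arow_nn[OF a] by (intro suminf_nonneg) auto
  have g: "summable (\<lambda>k. C * (inverse \<theta>) ^ (k + j))"
  proof -
    have "norm (inverse \<theta>) < 1" using th1 by (simp add: inverse_less_1_iff)
    thus ?thesis by (intro summable_mult summable_ignore_initial_segment[where k=j] summable_geometric)
  qed
  show ?thesis
  proof (rule summable_bound[OF nn _ g])
    fix k
    have "tlA a (k + j) \<le> C / \<theta> ^ (k + j)" using tl_le[OF a] unfolding C_def .
    also have "\<dots> = C * (inverse \<theta>) ^ (k + j)" by (simp add: divide_inverse power_inverse)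
    finally show "tlA a (k + j) \<le> C * (inverse \<theta>) ^ (k + j)" .
  qed
qed

lemma U_le_tl: "a < M \<Longrightarrow> c < M \<Longrightarrow> U k $$ (a, c) \<le> tlA a (k + 1)"
  unfolding tlA_def using U_le_tail .

abbreviation "R \<equiv> Rstar1 M A"

lemma Rmat_eq: "Rmat M A k = U k * Nm" unfolding Rmat_def mat_inverse_Nm ..

lemma Rk_entry: "a < M \<Longrightarrow> b < M \<Longrightarrow> Rmat M A k $$ (a, b) = (\<Sum>c<M. U k $$ (a, c) * Nm $$ (c, b))"
  unfolding Rmat_eq using mult_entry[OF U_carrier Nm_carrier] by blast

lemma Rk_nn: "a < M \<Longrightarrow> b < M \<Longrightarrow> 0 \<le> Rmat M A k $$ (a, b)"
  unfolding Rk_entry using U_nn Nm_nn by (intro sum_nonneg mult_nonneg_nonneg) auto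

lemma Rk_pos: "a < M \<Longrightarrow> b < M \<Longrightarrow> 0 < Rmat M A k $$ (a, b) \<longleftrightarrow> (\<exists>c<M. 0 < U k $$ (a, c) \<and> (c, b) \<in> U0rel\<^sup>*)"
proof -
  assume ab: "a < M" "b < M"
  have "0 < (U k * Nm) $$ (a, b) \<longleftrightarrow> (\<exists>c<M. 0 < U k $$ (a, c) \<and> 0 < Nm $$ (c, b))"
    using mult_pos_iff[OF U_carrier Nm_carrier ab] U_nn Nm_nn by simp
  also have "\<dots> \<longleftrightarrow> (\<exists>c<M. 0 < U k $$ (a, c) \<and> (c, b) \<in> U0rel\<^sup>*)"
    using Nm_pos[OF _ ab(2)] by blast
  finally show ?thesis unfolding Rmat_eq .
qed

lemma Rk_le: "a < M \<Longrightarrow> b < M \<Longrightarrow> Rmat M A k $$ (a, b) \<le> tlA a (k + 1) * (\<Sum>c<M. Nm $$ (c, b))"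
  unfolding Rk_entry sum_distrib_left using U_le_tl Nm_nn by (intro sum_mono mult_right_mono) auto

lemma R_entry: "a < M \<Longrightarrow> b < M \<Longrightarrow> R $$ (a, b) = (\<Sum>k. Rmat M A (Suc k) $$ (a, b))"
  unfolding Rstar1_def msuminf_def by simp

lemma R_summable: "a < M \<Longrightarrow> b < M \<Longrightarrow> summable (\<lambda>k. Rmat M A (Suc k) $$ (a, b))"
proof (rule summable_bound[where g = "\<lambda>k. tlA a (k + 2) * (\<Sum>c<M. Nm $$ (c, b))"])
  assume ab: "a < M" "b < M"
  show "0 \<le> Rmat M A (Suc k) $$ (a, b)" for k using Rk_nn ab .
  show "Rmat M A (Suc k) $$ (a, b) \<le> tlA a (k + 2) * (\<Sum>c<M. Nm $$ (c, b))" for k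
    using Rk_le[OF ab, of "Suc k"] by simp
  show "summable (\<lambda>k. tlA a (k + 2) * (\<Sum>c<M. Nm $$ (c, b)))"
    using tl_summable[OF ab(1)] by (intro summable_mult2)
qed

lemma R_nn: "a < M \<Longrightarrow> b < M \<Longrightarrow> 0 \<le> R $$ (a, b)"
proof -
  assume ab: "a < M" "b < M"
  show ?thesis unfolding R_entry[OF ab] by (rule suminf_nonneg[OF R_summable[OF ab] Rk_nn[OF ab]])
qed

definition Ek :: "nat \<Rightarrow> nat \<Rightarrow> nat \<Rightarrow> bool" where
  "Ek k a b \<longleftrightarrow> 1 \<le> k \<and> a < M \<and> b < M \<and> (\<exists>c<M. 0 < U k $$ (a, c) \<and> (c, b) \<in> U0rel\<^sup>*)"

lemma R_pos: "a < M \<Longrightarrow> b < M \<Longrightarrow> 0 < R $$ (a, b) \<longleftrightarrow> (\<exists>k. Ek k a b)"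
proof -
  assume ab: "a < M" "b < M"
  have "0 < R $$ (a, b) \<longleftrightarrow> (\<exists>k. 0 < Rmat M A (Suc k) $$ (a, b))"
    unfolding R_entry[OF ab] using R_summable[OF ab] Rk_nn[OF ab] by (intro suminf_pos_iff_nn) auto
  also have "\<dots> \<longleftrightarrow> (\<exists>k. Ek k a b)"
  proof
    assume "\<exists>k. 0 < Rmat M A (Suc k) $$ (a, b)"
    then obtain k where "0 < Rmat M A (Suc k) $$ (a, b)" by blast
    hence "Ek (Suc k) a b" using Rk_pos[OF ab] ab unfolding Ek_def by simp
    thus "\<exists>k. Ek k a b" by blast
  next
    assume "\<exists>k. Ek k a b"
    then obtain k where k: "Ek k a b" by blast
    then obtain k' where "k = Suc k'" unfolding Ek_def by (cases k) auto
    hence "0 < Rmat M A (Suc k') $$ (a, b)" using k Rk_pos[OF ab] unfolding Ek_def by simp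
    thus "\<exists>k. 0 < Rmat M A (Suc k) $$ (a, b)" by blast
  qed
  finally show ?thesis .
qed

end


locale qbd4 = qbd3 +
  assumes irrA: "irred M (\<lambda>i j. \<Sum>k. A k $$ (i, j))"
begin

lemma Ek_idx: "Ek k a b \<Longrightarrow> 1 \<le> k \<and> a < M \<and> b < M" unfolding Ek_def by auto

lemma Ek_up: "q < M \<Longrightarrow> q' < M \<Longrightarrow> 0 < A m $$ (q, q') \<Longrightarrow> 2 \<le> m \<Longrightarrow> Ek (m - 1) q q'"
proof -
  assume a: "q < M" "q' < M" "0 < A m $$ (q, q')" "2 \<le> m"
  have "A (0 + (m - 1) + 1) = A m" using a(4) by simp
  hence x: "0 < A (0 + (m - 1) + 1) $$ (q, q')" using a(3) by simp
  have f: "fpa0 0 q' q'" unfolding fpa0_def by simp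
  have "0 < U (m - 1) $$ (q, q')" using U_pos[OF a(1,2), of "m - 1"] a(2) x f by blast
  thus ?thesis unfolding Ek_def using a by auto
qed

lemma Ek_U0: "Ek k w q \<Longrightarrow> (q, q') \<in> U0rel \<Longrightarrow> Ek k w q'"
proof -
  assume a: "Ek k w q" "(q, q') \<in> U0rel"
  then obtain c where c: "1 \<le> k" "w < M" "c < M" "0 < U k $$ (w, c)" "(c, q) \<in> U0rel\<^sup>*"
    unfolding Ek_def by blast
  have "(c, q') \<in> U0rel\<^sup>*" using c(5) a(2) by (rule rtrancl_into_rtrancl)
  moreover have "q' < M" using a(2) unfolding U0rel_def by simp
  ultimately show ?thesis unfolding Ek_def using c by blast
qed

lemma Ek_same: "Ek k w q \<Longrightarrow> q' < M \<Longrightarrow> 0 < A 1 $$ (q, q') \<Longrightarrow> Ek k w q'"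
proof -
  assume a: "Ek k w q" "q' < M" "0 < A 1 $$ (q, q')"
  have "q < M" using Ek_idx[OF a(1)] by simp
  from U0_A1[OF this a(2,3)] show ?thesis using Ek_U0[OF a(1)] by blast
qed

lemma Ek_down: "Ek k w q \<Longrightarrow> q' < M \<Longrightarrow> 0 < A 0 $$ (q, q') \<Longrightarrow>
  (2 \<le> k \<and> Ek (k - 1) w q') \<or> (k = 1 \<and> (w, q') \<in> U0rel)"
proof -
  assume a: "Ek k w q" "q' < M" "0 < A 0 $$ (q, q')"
  from a(1) obtain c where c: "c < M" "0 < U k $$ (w, c)" "(c, q) \<in> U0rel\<^sup>*" and
    kwq: "1 \<le> k" "w < M" "q < M" unfolding Ek_def by auto
  from U_pos[OF kwq(2) c(1)] c(2) obtain m x where mx: "x < M" "0 < A (m + k + 1) $$ (w, x)" "fpa0 m x c" by blast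
  have "fpa 1 c q'" using U0rel_fp[OF c(3) kwq(3) a(2,3)] .
  hence f: "fpa0 (m + 1) x q'"
    using mx(3) fpa_join[of m x c 1 q'] unfolding fpa0_def by (cases "m = 0") auto
  show ?thesis
  proof (cases "k = 1")
    case True
    have "A (Suc (m + 1)) = A (m + k + 1)" using True by simp
    hence "(w, q') \<in> U0rel" using U0_step[OF kwq(2) a(2), of "m + 1" x] mx f by simp
    thus ?thesis using True by simp
  next
    case False
    hence k2: "2 \<le> k" using kwq by simp
    have "A ((m + 1) + (k - 1) + 1) = A (m + k + 1)" using k2 by simp
    hence "0 < A ((m + 1) + (k - 1) + 1) $$ (w, x)" using mx(2) by simp
    hence "0 < U (k - 1) $$ (w, q')" using U_pos[OF kwq(2) a(2), of "k - 1"] mx(1) f by blast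
    hence "Ek (k - 1) w q'" unfolding Ek_def using k2 kwq a(2) by auto
    thus ?thesis using k2 by simp
  qed
qed

inductive chain :: "nat \<Rightarrow> nat \<Rightarrow> nat \<Rightarrow> nat \<Rightarrow> bool" where
  ch0: "a < M \<Longrightarrow> chain a a 0 0"
| chS: "chain a w L r \<Longrightarrow> Ek k w q \<Longrightarrow> chain a q (L + k) (Suc r)"

lemma chain_idx: "chain a q L r \<Longrightarrow> a < M \<and> q < M"
  by (induction rule: chain.induct) (auto simp: Ek_def)

lemma chain_len: "chain a q L r \<Longrightarrow> r \<le> L"
  by (induction rule: chain.induct) (auto simp: Ek_def)

lemma chain_0: "chain a q L 0 \<Longrightarrow> L = 0 \<and> q = a"
  by (cases rule: chain.cases) auto

lemma chain_Suc: "chain a q L (Suc r) \<Longrightarrow> \<exists>w L0 k. chain a w L0 r \<and> Ek k w q \<and> L = L0 + k"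
  by (cases rule: chain.cases) auto

lemma chain_app: "chain b c L2 r2 \<Longrightarrow> chain a b L1 r1 \<Longrightarrow> chain a c (L1 + L2) (r1 + r2)"
proof (induction arbitrary: rule: chain.induct)
  case (ch0 a)
  then show ?case by simp
next
  case (chS a w L r k q)
  then show ?case using chain.chS[of _ w "L1 + L" "r1 + r" k q] by (simp add: add.assoc)
qed

definition ERel :: "(nat \<times> nat) set" where
  "ERel = {(a, b). a < M \<and> b < M \<and> 0 < R $$ (a, b)}"

lemma Ek_ERel: "Ek k a b \<Longrightarrow> (a, b) \<in> ERel"
  unfolding ERel_def using R_pos Ek_idx by blast

lemma chain_ERel: "chain a q L r \<Longrightarrow> 0 < r \<Longrightarrow> (a, q) \<in> ERel\<^sup>+"
proof (induction rule: chain.induct)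
  case (ch0 a)
  then show ?case by simp
next
  case (chS a w L r k q)
  show ?case
  proof (cases "r = 0")
    case True
    hence "w = a" using chain_0 chS by blast
    thus ?thesis using Ek_ERel[OF chS(2)] by auto
  next
    case False
    thus ?thesis using chS Ek_ERel[OF chS(2)] by auto
  qed
qed

lemma ERel_chain: "(a, q) \<in> ERel\<^sup>+ \<Longrightarrow> \<exists>L r. chain a q L (Suc r)"
proof (induction rule: trancl_induct)
  case (base y)
  hence "a < M" "y < M" "\<exists>k. Ek k a y" unfolding ERel_def using R_pos by auto
  thus ?case using chS[OF ch0] by blast
next
  case (step y z)
  hence "y < M" "z < M" "\<exists>k. Ek k y z" unfolding ERel_def using R_pos by auto
  thus ?case using step chS by blast
qed

lemma STEP:
  assumes ch: "chain a q L (Suc r)" and q': "q' < M" and A: "0 < A m $$ (q, q')" and c: "2 \<le> L \<or> m \<noteq> 0"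
  shows "\<exists>r'. chain a q' (L + m - 1) (Suc r')"
proof -
  from chain_Suc[OF ch] obtain w L0 k where wk: "chain a w L0 r" "Ek k w q" "L = L0 + k" by blast
  have k1: "1 \<le> k" "q < M" using wk Ek_idx by auto
  consider "2 \<le> m" | "m = 1" | "m = 0" by linarith
  thus ?thesis
  proof cases
    case 1
    have "Ek (m - 1) q q'" using Ek_up[OF k1(2) q' A 1] .
    hence "chain a q' (L + (m - 1)) (Suc (Suc r))" using chS[OF ch] by blast
    moreover have "L + (m - 1) = L + m - 1" using 1 by simp
    ultimately show ?thesis by auto
  next
    case 2
    have "Ek k w q'" using Ek_same[OF wk(2) q'] A 2 by simp
    thus ?thesis using chS[OF wk(1)] wk(3) 2 by auto
  next
    case 3
    from Ek_down[OF wk(2) q'] A 3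
    have "(2 \<le> k \<and> Ek (k - 1) w q') \<or> (k = 1 \<and> (w, q') \<in> U0rel)" by simp
    thus ?thesis
    proof
      assume "2 \<le> k \<and> Ek (k - 1) w q'"
      hence "chain a q' (L0 + (k - 1)) (Suc r)" using chS[OF wk(1)] by blast
      moreover have "L0 + (k - 1) = L + m - 1" using wk(3) 3 k1 by simp
      ultimately show ?thesis by auto
    next
      assume kw: "k = 1 \<and> (w, q') \<in> U0rel"
      show ?thesis
      proof (cases r)
        case 0
        hence "L0 = 0" using chain_0 wk(1) by blast
        hence False using c 3 wk(3) kw by simp
        thus ?thesis ..
      next
        case (Suc r'')
        from chain_Suc[OF wk(1)[unfolded Suc]] obtain w' L1 k' where
          w': "chain a w' L1 r''" "Ek k' w' w" "L0 = L1 + k'" by blast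
        have "Ek k' w' q'" using Ek_U0[OF w'(2)] kw by blast
        hence "chain a q' (L1 + k') (Suc r'')" using chS[OF w'(1)] by blast
        moreover have "L1 + k' = L + m - 1" using w'(3) wk(3) kw 3 by simp
        ultimately show ?thesis by auto
      qed
    qed
  qed
qed

definition W :: "(nat \<times> nat) set" where
  "W = {(a, b). a < M \<and> b < M \<and> 0 < (\<Sum>k. A k $$ (a, b))}"

lemma W_A: "(x, y) \<in> W \<Longrightarrow> \<exists>m. 0 < A m $$ (x, y)"
proof -
  assume "(x, y) \<in> W"
  hence xy: "x < M" "y < M" "0 < (\<Sum>k. A k $$ (x, y))" unfolding W_def by auto
  thus ?thesis using suminf_pos_iff_nn[OF sumA[OF xy(1,2)] nnA[OF xy(1,2)]] by blast
qed

lemma walk: "(q, q') \<in> W ^^ t \<Longrightarrow> chain a q L (Suc r) \<Longrightarrow> t + 2 \<le> L \<Longrightarrow>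
    \<exists>L' r'. chain a q' L' (Suc r') \<and> L \<le> L' + t"
proof (induction t arbitrary: q')
  case 0
  then show ?case by auto
next
  case (Suc t)
  from Suc.prems(1) obtain y where y: "(q, y) \<in> W ^^ t" "(y, q') \<in> W" by auto
  from Suc.IH[OF y(1) Suc.prems(2)] Suc.prems(3) obtain L' r' where
    L': "chain a y L' (Suc r')" "L \<le> L' + t" by auto
  obtain m where m: "0 < A m $$ (y, q')" using W_A[OF y(2)] by blast
  have q': "q' < M" using y(2) unfolding W_def by auto
  have "2 \<le> L'" using L'(2) Suc.prems(3) by simp
  from STEP[OF L'(1) q' m] this obtain r'' where "chain a q' (L' + m - 1) (Suc r'')" by blast
  moreover have "L \<le> (L' + m - 1) + Suc t" using L'(2) by simp
  ultimately show ?case by blast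
qed

lemma W_trancl: "i < M \<Longrightarrow> j < M \<Longrightarrow> (i, j) \<in> W\<^sup>+"
  using irrA unfolding irred_def W_def by blast

lemma chain_pow: "chain i i L (Suc r) \<Longrightarrow> chain i i (Suc n * L) (Suc n * Suc r)"
proof (induction n)
  case 0
  then show ?case by simp
next
  case (Suc n)
  from chain_app[OF Suc.prems Suc.IH[OF Suc.prems]] show ?case by (simp add: algebra_simps)
qed

lemma D_reach: "(i, i) \<in> ERel\<^sup>+ \<Longrightarrow> j < M \<Longrightarrow> (i, j) \<in> ERel\<^sup>+"
proof -
  assume ii: "(i, i) \<in> ERel\<^sup>+" and j: "j < M"
  from ERel_chain[OF ii] obtain L r where ch: "chain i i L (Suc r)" by blast
  have iM: "i < M" using chain_idx[OF ch] by simp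
  from W_trancl[OF iM j] obtain t where t: "(i, j) \<in> W ^^ t" using trancl_power by blast
  have L1: "1 \<le> L" using chain_len[OF ch] by simp
  have ch2: "chain i i (Suc (t + 1) * L) (Suc (t + 1) * Suc r)" using chain_pow[OF ch] .
  have eq: "Suc (t + 1) * Suc r = Suc (r + (t + 1) * Suc r)" by simp
  have ch3: "chain i i (Suc (t + 1) * L) (Suc (r + (t + 1) * Suc r))" using ch2 unfolding eq .
  have "t + 2 \<le> Suc (t + 1) * L" using L1 by (metis Suc_eq_plus1 add_2_eq_Suc' mult.right_neutral mult_le_mono2)
  from walk[OF t ch3 this] obtain L' r' where "chain i j L' (Suc r')" by blast
  from chain_ERel[OF this] show ?thesis by simp
qed


definition "tw q a = (SOME t. (q, a) \<in> W ^^ t)"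

lemma tw: "q < M \<Longrightarrow> a < M \<Longrightarrow> (q, a) \<in> W ^^ tw q a"
  unfolding tw_def using W_trancl trancl_power by (metis someI_ex)

definition "Bd = Max ((\<lambda>(q, a). tw q a) ` ({..<M} \<times> {..<M})) + 2"

lemma tw_Bd: "q < M \<Longrightarrow> a < M \<Longrightarrow> tw q a + 2 \<le> Bd"
  unfolding Bd_def by (auto intro!: Max_ge)

lemma chain_bound:
  assumes acyc: "\<And>a. a < M \<Longrightarrow> (a, a) \<notin> ERel\<^sup>+"
    and ch: "chain a q L (Suc r)"
  shows "L < Bd"
proof (rule ccontr)
  assume "\<not> L < Bd"
  hence L: "tw q a + 2 \<le> L" using tw_Bd chain_idx[OF ch] by fastforce
  from walk[OF tw ch L] chain_idx[OF ch] obtain L' r' where "chain a a L' (Suc r')" by blast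
  hence "(a, a) \<in> ERel\<^sup>+" using chain_ERel by blast
  thus False using acyc chain_idx[OF ch] by blast
qed

definition "phi q = Max ({0} \<union> {L. \<exists>a r. chain a q L (Suc r)})"

lemma phi_fin:
  assumes acyc: "\<And>a. a < M \<Longrightarrow> (a, a) \<notin> ERel\<^sup>+"
  shows "finite ({0} \<union> {L. \<exists>a r. chain a q L (Suc r)})"
proof -
  have "{L. \<exists>a r. chain a q L (Suc r)} \<subseteq> {..<Bd}" using chain_bound[OF acyc] by blast
  thus ?thesis using finite_subset by blast
qed

lemma phi_ge: "(\<And>a. a < M \<Longrightarrow> (a, a) \<notin> ERel\<^sup>+) \<Longrightarrow> chain a q L (Suc r) \<Longrightarrow> L \<le> phi q"
  unfolding phi_def using phi_fin by (intro Max_ge) auto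

lemma phi_mem: "(\<And>a. a < M \<Longrightarrow> (a, a) \<notin> ERel\<^sup>+) \<Longrightarrow> phi q \<noteq> 0 \<Longrightarrow> \<exists>a r. chain a q (phi q) (Suc r)"
proof -
  assume acyc: "\<And>a. a < M \<Longrightarrow> (a, a) \<notin> ERel\<^sup>+" and nz: "phi q \<noteq> 0"
  have "phi q \<in> {0} \<union> {L. \<exists>a r. chain a q L (Suc r)}"
    unfolding phi_def using phi_fin[OF acyc] by (intro Max_in) auto
  thus ?thesis using nz by auto
qed

lemma phi_pot:
  assumes acyc: "\<And>a. a < M \<Longrightarrow> (a, a) \<notin> ERel\<^sup>+"
    and pq: "p < M" "q < M" "0 < A m $$ (p, q)"
  shows "m + phi p \<le> phi q + 1"
proof (cases "phi p = 0")
  case True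
  show ?thesis
  proof (cases "2 \<le> m")
    case m2: True
    have "chain p q (0 + (m - 1)) (Suc 0)" using chS[OF ch0[OF pq(1)] Ek_up[OF pq m2]] .
    hence "m - 1 \<le> phi q" using phi_ge[OF acyc] by simp
    thus ?thesis using True m2 by simp
  next
    case False
    thus ?thesis using True by simp
  qed
next
  case False
  from phi_mem[OF acyc False] obtain a r where ch: "chain a p (phi p) (Suc r)" by blast
  show ?thesis
  proof (cases "m = 0 \<and> phi p = 1")
    case True
    thus ?thesis by simp
  next
    case c: False
    have "2 \<le> phi p \<or> m \<noteq> 0" using c False by auto
    from STEP[OF ch pq(2,3) this] obtain r' where "chain a q (phi p + m - 1) (Suc r')" by blast
    hence "phi p + m - 1 \<le> phi q" using phi_ge[OF acyc] by blast
    thus ?thesis using False by simp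
  qed
qed

end

lemma rev_trancl: "(a, b) \<in> {(y, x). x \<in> K \<and> y \<in> K \<and> (x, y) \<in> E}\<^sup>+ \<Longrightarrow> (b, a) \<in> E\<^sup>+"
proof (induction rule: trancl_induct)
  case (base y) thus ?case by auto
next
  case (step y z)
  hence "(z, y) \<in> E" by auto
  thus ?case using step(3) by (rule trancl_into_trancl2)
qed

lemma sink_exists:
  assumes fin: "finite K" and ne: "K \<noteq> {}" and acyc: "\<And>x. x \<in> K \<Longrightarrow> (x, x) \<notin> E\<^sup>+"
  shows "\<exists>x\<in>K. \<forall>y\<in>K. (x, y) \<notin> E"
proof -
  define r where "r = {(y, x). x \<in> K \<and> y \<in> K \<and> (x, y) \<in> E}"
  have "r \<subseteq> K \<times> K" unfolding r_def by auto
  moreover have "finite (K \<times> K)" using fin by simp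
  ultimately have fr: "finite r" by (rule finite_subset)
  have "acyclic r" unfolding acyclic_def
  proof (intro allI notI)
    fix z assume "(z, z) \<in> r\<^sup>+"
    hence "(z, z) \<in> E\<^sup>+" using rev_trancl[of z z K E] unfolding r_def by blast
    moreover have "z \<in> K" using \<open>(z, z) \<in> r\<^sup>+\<close> trancl_subset_Sigma[OF \<open>r \<subseteq> K \<times> K\<close>] by blast
    ultimately show False using acyc by blast
  qed
  hence "wf r" using finite_acyclic_wf fr by blast
  from ne obtain x0 where "x0 \<in> K" by blast
  from wfE_min[OF \<open>wf r\<close> this] obtain z where z: "z \<in> K" "\<And>y. (y, z) \<in> r \<Longrightarrow> y \<notin> K" by blast
  have "\<forall>y\<in>K. (z, y) \<notin> E"
  proof (intro ballI notI)
    fix y assume "y \<in> K" "(z, y) \<in> E"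
    hence "(y, z) \<in> r" unfolding r_def using z(1) by simp
    thus False using z(2) \<open>y \<in> K\<close> by blast
  qed
  thus ?thesis using z(1) by blast
qed

lemma topo:
  assumes "finite K" and "\<And>x. x \<in> K \<Longrightarrow> (x, x) \<notin> E\<^sup>+"
  shows "\<exists>g. bij_betw g {..<card K} K \<and> (\<forall>i<card K. \<forall>j<card K. (g i, g j) \<in> E \<longrightarrow> i < j)"
  using assms
proof (induction "card K" arbitrary: K)
  case 0
  hence "K = {}" by simp
  thus ?case by (auto simp: bij_betw_def)
next
  case (Suc n)
  hence ne: "K \<noteq> {}" by auto
  from sink_exists[OF Suc.prems(1) ne Suc.prems(2)] obtain x where x: "x \<in> K" "\<forall>y\<in>K. (x, y) \<notin> E" by blast
  define K' where "K' = K - {x}"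
  have cK': "card K' = n" unfolding K'_def using Suc.hyps(2) x Suc.prems(1) by simp
  have "\<exists>g. bij_betw g {..<card K'} K' \<and> (\<forall>i<card K'. \<forall>j<card K'. (g i, g j) \<in> E \<longrightarrow> i < j)"
    using Suc.hyps(1)[of K'] cK' Suc.prems unfolding K'_def by auto
  then obtain g' where g': "bij_betw g' {..<n} K'" "\<forall>i<n. \<forall>j<n. (g' i, g' j) \<in> E \<longrightarrow> i < j"
    using cK' by auto
  define g where "g i = (if i < n then g' i else x)" for i
  have img: "g ` {..<Suc n} = K"
  proof -
    have "g ` {..<Suc n} = g ` {..<n} \<union> {g n}" by (auto simp: lessThan_Suc)
    also have "g ` {..<n} = g' ` {..<n}" unfolding g_def by auto
    also have "\<dots> = K'" using g'(1) by (simp add: bij_betw_def)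
    finally show ?thesis unfolding K'_def g_def using x by auto
  qed
  have inj: "inj_on g {..<Suc n}"
  proof (rule inj_onI)
    fix a b assume ab: "a \<in> {..<Suc n}" "b \<in> {..<Suc n}" "g a = g b"
    have inK': "i < n \<Longrightarrow> g' i \<in> K'" for i using g'(1) by (auto simp: bij_betw_def)
    have xK': "x \<notin> K'" unfolding K'_def by simp
    show "a = b"
    proof (cases "a < n"; cases "b < n")
      assume "a < n" "b < n"
      thus ?thesis using ab g'(1) unfolding g_def bij_betw_def inj_on_def by auto
    next
      assume "a < n" "\<not> b < n"
      thus ?thesis using ab inK'[of a] xK' unfolding g_def by auto
    next
      assume "\<not> a < n" "b < n"
      thus ?thesis using ab inK'[of b] xK' unfolding g_def by auto
    next
      assume "\<not> a < n" "\<not> b < n"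
      thus ?thesis using ab by auto
    qed
  qed
  have ord: "\<forall>i<Suc n. \<forall>j<Suc n. (g i, g j) \<in> E \<longrightarrow> i < j"
  proof (intro allI impI)
    fix i j assume ij: "i < Suc n" "j < Suc n" "(g i, g j) \<in> E"
    have gK: "k < Suc n \<Longrightarrow> g k \<in> K" for k using img by auto
    show "i < j"
    proof (cases "i < n")
      case True
      show ?thesis
      proof (cases "j < n")
        case True
        thus ?thesis using ij \<open>i < n\<close> g'(2) unfolding g_def by auto
      next
        case False thus ?thesis using \<open>i < n\<close> ij by simp
      qed
    next
      case False
      hence "g i = x" unfolding g_def by simp
      thus ?thesis using ij(3) x(2) gK[OF ij(2)] by auto
    qed
  qed
  show ?case using img inj ord Suc.hyps(2) unfolding bij_betw_def by auto
qed

context qbd4 begin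

definition "Ast i j = (\<Sum>k. \<theta> ^ k * A k $$ (i, j))"
definition "Ab i j = (\<Sum>k. A k $$ (i, j))"

lemma Astar_entry: "i < M \<Longrightarrow> j < M \<Longrightarrow> Astar M A \<theta> $$ (i, j) = Ast i j"
proof -
  assume ij: "i < M" "j < M"
  have "(\<theta> ^ k \<cdot>\<^sub>m A k) $$ (i, j) = \<theta> ^ k * A k $$ (i, j)" for k
    using dimA[of k] ij by (intro index_smult_mat(1)) auto
  thus ?thesis unfolding Astar_def msuminf_def Ast_def using ij by simp
qed

lemma Astar_carrier: "Astar M A \<theta> \<in> carrier_mat M M"
  unfolding Astar_def msuminf_def by simp

lemma Ast_nn: "i < M \<Longrightarrow> j < M \<Longrightarrow> 0 \<le> Ast i j"
  unfolding Ast_def using sumth nnA th1 by (intro suminf_nonneg) auto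

lemma Ab_nn: "i < M \<Longrightarrow> j < M \<Longrightarrow> 0 \<le> Ab i j"
  unfolding Ab_def using sumA nnA by (intro suminf_nonneg) auto

lemma Ab_rs: "i < M \<Longrightarrow> (\<Sum>j<M. Ab i j) = 1"
  unfolding Ab_def using stoch by simp

lemma eigen_eq:
  assumes v: "v \<in> carrier_vec M" and ev: "map_mat complex_of_real (Astar M A \<theta>) *\<^sub>v v = complex_of_real \<theta> \<cdot>\<^sub>v v"
    and i: "i < M"
  shows "complex_of_real \<theta> * v $ i = (\<Sum>j<M. complex_of_real (Ast i j) * v $ j)"
proof -
  have "(map_mat complex_of_real (Astar M A \<theta>) *\<^sub>v v) $ i = (complex_of_real \<theta> \<cdot>\<^sub>v v) $ i" using ev by simp
  moreover have "(complex_of_real \<theta> \<cdot>\<^sub>v v) $ i = complex_of_real \<theta> * v $ i" using v i by simp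
  moreover have "(map_mat complex_of_real (Astar M A \<theta>) *\<^sub>v v) $ i = (\<Sum>j<M. complex_of_real (Ast i j) * v $ j)"
    using v i Astar_carrier Astar_entry by (simp add: scalar_prod_def atLeast0LessThan)
  ultimately show ?thesis by simp
qed

lemma eigen_ineq:
  assumes v: "v \<in> carrier_vec M" and ev: "map_mat complex_of_real (Astar M A \<theta>) *\<^sub>v v = complex_of_real \<theta> \<cdot>\<^sub>v v"
    and i: "i < M"
  shows "\<theta> * cmod (v $ i) \<le> (\<Sum>j<M. Ast i j * cmod (v $ j))"
proof -
  have "\<theta> * cmod (v $ i) = cmod (complex_of_real \<theta> * v $ i)" using th1 by (simp add: norm_mult)
  also have "\<dots> = cmod (\<Sum>j<M. complex_of_real (Ast i j) * v $ j)" using eigen_eq[OF v ev i] by simp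
  also have "\<dots> \<le> (\<Sum>j<M. cmod (complex_of_real (Ast i j) * v $ j))" by (rule norm_sum)
  also have "\<dots> = (\<Sum>j<M. Ast i j * cmod (v $ j))" using Ast_nn i by (intro sum.cong refl) (simp add: norm_mult)
  finally show ?thesis .
qed


context
  fixes ph :: "nat \<Rightarrow> nat"
  assumes pot: "\<And>p q m. p < M \<Longrightarrow> q < M \<Longrightarrow> 0 < A m $$ (p, q) \<Longrightarrow> m + ph p \<le> ph q + 1"
begin

definition "e i j k = \<theta> ^ (k + ph i) * A k $$ (i, j)"

lemma e_le: "i < M \<Longrightarrow> j < M \<Longrightarrow> e i j k \<le> \<theta> ^ (ph j + 1) * A k $$ (i, j)"
proof (cases "0 < A k $$ (i, j)")
  case True
  assume ij: "i < M" "j < M"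
  have "k + ph i \<le> ph j + 1" using pot[OF ij True] by simp
  hence "\<theta> ^ (k + ph i) \<le> \<theta> ^ (ph j + 1)" using th1 by (intro power_increasing) auto
  thus ?thesis unfolding e_def using nnA[OF ij] by (intro mult_right_mono) auto
next
  case False
  assume ij: "i < M" "j < M"
  hence "A k $$ (i, j) = 0" using nnA[OF ij, of k] False by linarith
  thus ?thesis unfolding e_def by simp
qed

lemma e_nn: "i < M \<Longrightarrow> j < M \<Longrightarrow> 0 \<le> e i j k"
  unfolding e_def using nnA th1 by simp

lemma e_summable: "i < M \<Longrightarrow> j < M \<Longrightarrow> summable (e i j)"
  by (rule summable_bound[OF e_nn e_le summable_mult[OF sumA]]) auto

lemma Ast_scaled: "i < M \<Longrightarrow> j < M \<Longrightarrow> Ast i j * \<theta> ^ ph i = (\<Sum>k. e i j k)"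
proof -
  assume ij: "i < M" "j < M"
  have "Ast i j * \<theta> ^ ph i = (\<Sum>k. \<theta> ^ k * A k $$ (i, j) * \<theta> ^ ph i)"
    unfolding Ast_def using sumth[OF ij] by (rule suminf_mult2)
  also have "\<dots> = (\<Sum>k. e i j k)" unfolding e_def by (simp add: power_add algebra_simps)
  finally show ?thesis .
qed

lemma Ast_scaled_le: "i < M \<Longrightarrow> j < M \<Longrightarrow> Ast i j * \<theta> ^ ph i \<le> \<theta> ^ (ph j + 1) * Ab i j"
proof -
  assume ij: "i < M" "j < M"
  have "(\<Sum>k. e i j k) \<le> (\<Sum>k. \<theta> ^ (ph j + 1) * A k $$ (i, j))"
    using e_summable[OF ij] summable_mult[OF sumA[OF ij]] e_le[OF ij] by (intro suminf_le) auto
  also have "\<dots> = \<theta> ^ (ph j + 1) * Ab i j" unfolding Ab_def using sumA[OF ij] by (rule suminf_mult)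
  finally show ?thesis using Ast_scaled[OF ij] by simp
qed


context
  fixes v :: "complex vec"
  assumes v: "v \<in> carrier_vec M" "v \<noteq> 0\<^sub>v M"
    and ev: "map_mat complex_of_real (Astar M A \<theta>) *\<^sub>v v = complex_of_real \<theta> \<cdot>\<^sub>v v"
begin

definition "u j = cmod (v $ j) * \<theta> ^ ph j"

lemma u_nn: "0 \<le> u j" unfolding u_def using th1 by simp

lemma chainineq: "i < M \<Longrightarrow> \<theta> * u i \<le> (\<Sum>j<M. (Ast i j * \<theta> ^ ph i) * cmod (v $ j))
   \<and> (\<Sum>j<M. (Ast i j * \<theta> ^ ph i) * cmod (v $ j)) \<le> (\<Sum>j<M. (\<theta> ^ (ph j + 1) * Ab i j) * cmod (v $ j))
   \<and> (\<Sum>j<M. (\<theta> ^ (ph j + 1) * Ab i j) * cmod (v $ j)) = \<theta> * (\<Sum>j<M. Ab i j * u j)"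
proof -
  assume i: "i < M"
  have th0: "0 < \<theta>" using th1 by simp
  have "\<theta> * u i = \<theta> ^ ph i * (\<theta> * cmod (v $ i))" unfolding u_def by (simp add: algebra_simps)
  also have "\<dots> \<le> \<theta> ^ ph i * (\<Sum>j<M. Ast i j * cmod (v $ j))"
    using eigen_ineq[OF v(1) ev i] th0 by (intro mult_left_mono) auto
  also have "\<dots> = (\<Sum>j<M. (Ast i j * \<theta> ^ ph i) * cmod (v $ j))" by (simp add: sum_distrib_left algebra_simps)
  finally have 1: "\<theta> * u i \<le> (\<Sum>j<M. (Ast i j * \<theta> ^ ph i) * cmod (v $ j))" .
  have 2: "(\<Sum>j<M. (Ast i j * \<theta> ^ ph i) * cmod (v $ j)) \<le> (\<Sum>j<M. (\<theta> ^ (ph j + 1) * Ab i j) * cmod (v $ j))"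
    using Ast_scaled_le i by (intro sum_mono mult_right_mono) auto
  have 3: "(\<Sum>j<M. (\<theta> ^ (ph j + 1) * Ab i j) * cmod (v $ j)) = \<theta> * (\<Sum>j<M. Ab i j * u j)"
    unfolding u_def by (simp add: sum_distrib_left algebra_simps)
  show ?thesis using 1 2 3 by blast
qed

lemma u_sub: "i < M \<Longrightarrow> u i \<le> (\<Sum>j<M. Ab i j * u j)"
proof -
  assume i: "i < M"
  from chainineq[OF i] have "\<theta> * u i \<le> \<theta> * (\<Sum>j<M. Ab i j * u j)" by linarith
  thus ?thesis using th1 by simp
qed


lemma v_nz: "\<exists>j<M. v $ j \<noteq> 0"
proof (rule ccontr)
  assume "\<not> (\<exists>j<M. v $ j \<noteq> 0)"
  hence "v = 0\<^sub>v M" using v(1) by (intro eq_vecI) auto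
  thus False using v(2) by simp
qed

definition "cmax = Max (u ` {..<M})"

lemma cmax_ge: "j < M \<Longrightarrow> u j \<le> cmax" unfolding cmax_def by (intro Max_ge) auto

lemma cmax_in: "\<exists>i0<M. u i0 = cmax"
proof -
  have "cmax \<in> u ` {..<M}" unfolding cmax_def using Mpos by (intro Max_in) auto
  thus ?thesis by auto
qed

lemma cmax_pos: "0 < cmax"
proof -
  obtain j where j: "j < M" "v $ j \<noteq> 0" using v_nz by blast
  hence "0 < u j" unfolding u_def using th1 by simp
  thus ?thesis using cmax_ge[OF j(1)] by simp
qed

lemma u_prop: "i < M \<Longrightarrow> u i = cmax \<Longrightarrow> (i, j) \<in> W \<Longrightarrow> u j = cmax"
proof -
  assume i: "i < M" "u i = cmax" and ij: "(i, j) \<in> W"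
  have j: "j < M" "0 < Ab i j" using ij unfolding W_def Ab_def by simp_all
  have "(\<Sum>j<M. Ab i j * (cmax - u j)) = (\<Sum>j<M. cmax * Ab i j - Ab i j * u j)"
    by (rule sum.cong[OF refl]) (simp add: right_diff_distrib)
  also have "\<dots> = (\<Sum>j<M. cmax * Ab i j) - (\<Sum>j<M. Ab i j * u j)" by (rule sum_subtractf)
  also have "\<dots> = cmax * (\<Sum>j<M. Ab i j) - (\<Sum>j<M. Ab i j * u j)" by (simp add: sum_distrib_left)
  also have "\<dots> = cmax - (\<Sum>j<M. Ab i j * u j)" using Ab_rs[OF i(1)] by simp
  also have "\<dots> \<le> 0" using u_sub[OF i(1)] i(2) by simp
  finally have le: "(\<Sum>j<M. Ab i j * (cmax - u j)) \<le> 0" .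
  have nn: "\<And>j'. j' \<in> {..<M} \<Longrightarrow> 0 \<le> Ab i j' * (cmax - u j')"
  proof -
    fix j' assume "j' \<in> {..<M}"
    hence "j' < M" by simp
    thus "0 \<le> Ab i j' * (cmax - u j')" using Ab_nn[OF i(1)] cmax_ge by simp
  qed
  have "0 \<le> (\<Sum>j<M. Ab i j * (cmax - u j))" using nn by (rule sum_nonneg)
  hence "(\<Sum>j<M. Ab i j * (cmax - u j)) = 0" using le by linarith
  hence "\<forall>j'\<in>{..<M}. Ab i j' * (cmax - u j') = 0" using sum_nonneg_eq_0_iff[OF finite_lessThan nn] by simp
  hence "Ab i j * (cmax - u j) = 0" using j(1) by blast
  hence "cmax - u j = 0" using j(2) by simp
  thus ?thesis by simp
qed

lemma u_const: "j < M \<Longrightarrow> u j = cmax"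
proof -
  assume j: "j < M"
  obtain i0 where i0: "i0 < M" "u i0 = cmax" using cmax_in by blast
  have "(i0, j) \<in> W\<^sup>+" using W_trancl[OF i0(1) j] .
  thus ?thesis
  proof (induction rule: trancl_induct)
    case (base y) show ?case by (rule u_prop[OF i0 base])
  next
    case (step y z)
    have "y < M" using step(2) unfolding W_def by auto
    show ?case by (rule u_prop[OF \<open>y < M\<close> step(3) step(2)])
  qed
qed


lemma tight: "i < M \<Longrightarrow> j < M \<Longrightarrow> 0 < A k $$ (i, j) \<Longrightarrow> k + ph i = ph j + 1"
proof -
  assume ij: "i < M" "j < M" and pos: "0 < A k $$ (i, j)"
  have th0: "0 < \<theta>" using th1 by simp
  define S1 where "S1 = (\<Sum>j<M. (Ast i j * \<theta> ^ ph i) * cmod (v $ j))"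
  define S2 where "S2 = (\<Sum>j<M. (\<theta> ^ (ph j + 1) * Ab i j) * cmod (v $ j))"
  have c: "\<theta> * u i \<le> S1" "S1 \<le> S2" "S2 = \<theta> * (\<Sum>j<M. Ab i j * u j)"
    using chainineq[OF ij(1)] unfolding S1_def S2_def by auto
  have "(\<Sum>j<M. Ab i j * u j) = (\<Sum>j<M. Ab i j * cmax)" using u_const by simp
  also have "\<dots> = cmax" using Ab_rs[OF ij(1)] by (simp add: sum_distrib_right[symmetric])
  finally have sumc: "(\<Sum>j<M. Ab i j * u j) = u i" using u_const[OF ij(1)] by simp
  have "S2 = \<theta> * u i" using c(3) sumc by simp
  hence "S2 - S1 = 0" using c(1,2) by linarith
  moreover have "S2 - S1 = (\<Sum>j<M. (\<theta> ^ (ph j + 1) * Ab i j - Ast i j * \<theta> ^ ph i) * cmod (v $ j))"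
    unfolding S1_def S2_def by (simp add: sum_subtractf[symmetric] left_diff_distrib)
  ultimately have z: "(\<Sum>j<M. (\<theta> ^ (ph j + 1) * Ab i j - Ast i j * \<theta> ^ ph i) * cmod (v $ j)) = 0" by simp
  have nn: "\<And>j'. j' \<in> {..<M} \<Longrightarrow> 0 \<le> (\<theta> ^ (ph j' + 1) * Ab i j' - Ast i j' * \<theta> ^ ph i) * cmod (v $ j')"
  proof -
    fix j' assume "j' \<in> {..<M}"
    hence "j' < M" by simp
    thus "0 \<le> (\<theta> ^ (ph j' + 1) * Ab i j' - Ast i j' * \<theta> ^ ph i) * cmod (v $ j')"
      using Ast_scaled_le[OF ij(1)] by simp
  qed
  have "\<forall>j'\<in>{..<M}. (\<theta> ^ (ph j' + 1) * Ab i j' - Ast i j' * \<theta> ^ ph i) * cmod (v $ j') = 0"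
    using sum_nonneg_eq_0_iff[OF finite_lessThan nn] z by simp
  hence z2: "(\<theta> ^ (ph j + 1) * Ab i j - Ast i j * \<theta> ^ ph i) * cmod (v $ j) = 0" using ij(2) by blast
  have "0 < u j" using u_const[OF ij(2)] cmax_pos by simp
  hence "0 < cmod (v $ j)" unfolding u_def using th0 by (simp add: zero_less_mult_iff)
  hence eq: "\<theta> ^ (ph j + 1) * Ab i j = (\<Sum>k. e i j k)" using z2 Ast_scaled[OF ij] by simp
  define f where "f k' = \<theta> ^ (ph j + 1) * A k' $$ (i, j) - e i j k'" for k'
  have fs: "summable f" unfolding f_def using summable_mult[OF sumA[OF ij]] e_summable[OF ij] by (rule summable_diff)
  have "suminf f = \<theta> ^ (ph j + 1) * Ab i j - (\<Sum>k. e i j k)"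
  proof -
    have "suminf f = (\<Sum>k'. \<theta> ^ (ph j + 1) * A k' $$ (i, j)) - (\<Sum>k. e i j k)"
      unfolding f_def by (rule suminf_diff[symmetric, OF summable_mult[OF sumA[OF ij]] e_summable[OF ij]])
    also have "(\<Sum>k'. \<theta> ^ (ph j + 1) * A k' $$ (i, j)) = \<theta> ^ (ph j + 1) * Ab i j"
      unfolding Ab_def by (rule suminf_mult[OF sumA[OF ij]])
    finally show ?thesis .
  qed
  hence "suminf f = 0" using eq by simp
  moreover have fnn: "\<And>k'. 0 \<le> f k'" unfolding f_def using e_le[OF ij] by simp
  ultimately have "\<not> (0 < f k)" using suminf_pos_iff_nn[OF fs fnn] by auto
  hence "f k = 0" using fnn[of k] by linarith
  hence "\<theta> ^ (ph j + 1) = \<theta> ^ (k + ph i)" unfolding f_def e_def using pos by simp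
  hence "ph j + 1 = k + ph i" using power_inject_exp[OF th1] by blast
  thus ?thesis by simp
qed


lemma row_drift: "i < M \<Longrightarrow> (\<Sum>k. real k * (\<Sum>j<M. A k $$ (i, j))) = (\<Sum>j<M. (1 + real (ph j) - real (ph i)) * Ab i j)"
proof -
  assume i: "i < M"
  have t: "real k * A k $$ (i, j) = (1 + real (ph j) - real (ph i)) * A k $$ (i, j)" if j: "j < M" for k j
  proof (cases "0 < A k $$ (i, j)")
    case True
    from tight[OF i j True] have "real k = 1 + real (ph j) - real (ph i)" by linarith
    thus ?thesis by simp
  next
    case False
    hence "A k $$ (i, j) = 0" using nnA[OF i j, of k] by linarith
    thus ?thesis by simp
  qed
  have "(\<Sum>k. real k * (\<Sum>j<M. A k $$ (i, j))) = (\<Sum>k. \<Sum>j<M. (1 + real (ph j) - real (ph i)) * A k $$ (i, j))"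
  proof -
    have "real k * (\<Sum>j<M. A k $$ (i, j)) = (\<Sum>j<M. (1 + real (ph j) - real (ph i)) * A k $$ (i, j))" for k
      unfolding sum_distrib_left using t by (intro sum.cong refl) auto
    thus ?thesis by simp
  qed
  also have "\<dots> = (\<Sum>j<M. \<Sum>k. (1 + real (ph j) - real (ph i)) * A k $$ (i, j))"
    using sumA[OF i] by (intro suminf_sum summable_mult) auto
  also have "\<dots> = (\<Sum>j<M. (1 + real (ph j) - real (ph i)) * Ab i j)"
    unfolding Ab_def using sumA[OF i] by (intro sum.cong refl suminf_mult) auto
  finally show ?thesis .
qed

lemma drift_one:
  fixes pv :: "nat \<Rightarrow> real"
  assumes piA: "\<And>j. j < M \<Longrightarrow> (\<Sum>i<M. pv i * Ab i j) = pv j" and pie: "(\<Sum>i<M. pv i) = 1"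
  shows "(\<Sum>i<M. pv i * (\<Sum>k. real k * (\<Sum>j<M. A k $$ (i, j)))) = 1"
proof -
  have "(\<Sum>i<M. pv i * (\<Sum>k. real k * (\<Sum>j<M. A k $$ (i, j))))
      = (\<Sum>i<M. pv i * (\<Sum>j<M. (1 + real (ph j) - real (ph i)) * Ab i j))"
    using row_drift by simp
  also have "\<dots> = (\<Sum>i<M. pv i * (\<Sum>j<M. Ab i j) + (\<Sum>j<M. pv i * Ab i j * real (ph j)) - pv i * real (ph i) * (\<Sum>j<M. Ab i j))"
    by (intro sum.cong refl)
       (simp add: algebra_simps sum.distrib sum_subtractf sum_distrib_left sum_distrib_right)
  also have "\<dots> = (\<Sum>i<M. pv i + (\<Sum>j<M. pv i * Ab i j * real (ph j)) - pv i * real (ph i))"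
    using Ab_rs by simp
  also have "\<dots> = (\<Sum>i<M. pv i) + (\<Sum>i<M. \<Sum>j<M. pv i * Ab i j * real (ph j)) - (\<Sum>i<M. pv i * real (ph i))"
    by (simp add: sum.distrib sum_subtractf)
  also have "(\<Sum>i<M. \<Sum>j<M. pv i * Ab i j * real (ph j)) = (\<Sum>j<M. (\<Sum>i<M. pv i * Ab i j) * real (ph j))"
    by (subst sum.swap) (simp add: sum_distrib_right)
  also have "\<dots> = (\<Sum>j<M. pv j * real (ph j))" using piA by simp
  finally show ?thesis using pie by simp
qed

end
end
end

context qbd4 begin

lemma R_dim: "dim_row R = M" unfolding Rstar1_def msuminf_def by simp

definition "Dset = {i. i < M \<and> (i, i) \<in> ERel\<^sup>+}"

lemma ERel_M: "(a, b) \<in> ERel\<^sup>+ \<Longrightarrow> a < M \<and> b < M"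
proof -
  have "ERel \<subseteq> {..<M} \<times> {..<M}" unfolding ERel_def by auto
  from trancl_subset_Sigma[OF this] show "(a, b) \<in> ERel\<^sup>+ \<Longrightarrow> a < M \<and> b < M" by blast
qed

lemma Dset_reach: "x \<in> Dset \<Longrightarrow> y < M \<Longrightarrow> (x, y) \<in> ERel\<^sup>+"
  unfolding Dset_def using D_reach by blast

lemma into_D: "(x, y) \<in> ERel \<Longrightarrow> y \<in> Dset \<Longrightarrow> x \<in> Dset"
proof -
  assume xy: "(x, y) \<in> ERel" and y: "y \<in> Dset"
  have xM: "x < M" using xy unfolding ERel_def by simp
  have "(y, x) \<in> ERel\<^sup>+" using Dset_reach[OF y xM] .
  hence "(x, x) \<in> ERel\<^sup>+" using trancl_into_trancl2[OF xy] by blast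
  thus ?thesis unfolding Dset_def using xM by simp
qed

definition "SD = {(a, b). (a, b) \<in> ERel \<and> a \<in> Dset \<and> b \<in> Dset}"

lemma within_D: "(x, y) \<in> ERel\<^sup>+ \<Longrightarrow> y \<in> Dset \<Longrightarrow> (x, y) \<in> SD\<^sup>+ \<and> x \<in> Dset"
proof (induction rule: converse_trancl_induct)
  case (base x)
  have "x \<in> Dset" using into_D[OF base(1) base(2)] .
  thus ?case using base unfolding SD_def by auto
next
  case (step x z)
  hence "(z, y) \<in> SD\<^sup>+" "z \<in> Dset" by auto
  moreover have "x \<in> Dset" using into_D[OF step(1) \<open>z \<in> Dset\<close>] .
  moreover have "(x, z) \<in> SD" using step(1) \<open>x \<in> Dset\<close> \<open>z \<in> Dset\<close> unfolding SD_def by simp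
  ultimately show ?case using trancl_into_trancl2[of x z SD y] by blast
qed


lemma R_form:
  assumes Dne: "Dset \<noteq> {}"
  shows "irred_mat R \<or>
         (\<exists>p m. p permutes {..<M} \<and> 0 < m \<and> m \<le> M \<and>
            (\<forall>i j. m \<le> i \<and> i < M \<and> j < m \<longrightarrow> R $$ (p i, p j) = 0) \<and>
            irred m (\<lambda>i j. R $$ (p i, p j)) \<and>
            (\<forall>i j. m \<le> j \<and> j \<le> i \<and> i < M \<longrightarrow> R $$ (p i, p j) = 0))"
proof (cases "Dset = {..<M}")
  case True
  have rel: "{(a, b). a < M \<and> b < M \<and> R $$ (a, b) > 0} = ERel" unfolding ERel_def by auto
  have "irred_mat R" unfolding irred_mat_def irred_def R_dim rel
    using Dset_reach True by blast
  thus ?thesis by blast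
next
  case False
  have DM: "Dset \<subseteq> {..<M}" unfolding Dset_def by auto
  have finD: "finite Dset" using DM finite_subset by blast
  define K where "K = {..<M} - Dset"
  have finK: "finite K" unfolding K_def by simp
  have acK: "\<And>x. x \<in> K \<Longrightarrow> (x, x) \<notin> ERel\<^sup>+" unfolding K_def Dset_def by auto
  from topo[OF finK acK] obtain g where g: "bij_betw g {..<card K} K"
    "\<forall>i<card K. \<forall>j<card K. (g i, g j) \<in> ERel \<longrightarrow> i < j" by blast
  from ex_bij_betw_nat_finite[OF finD] obtain d where d: "bij_betw d {..<card Dset} Dset"
    by (auto simp: atLeast0LessThan)
  define m where "m = card Dset"
  have mM: "m \<le> M" unfolding m_def using card_mono[OF _ DM] by simp
  have cK: "card K = M - m" unfolding K_def m_def using card_Diff_subset[OF finD DM] by simp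
  have m0: "0 < m" unfolding m_def using Dne finD by (simp add: card_gt_0_iff)
  define p where "p i = (if i < m then d i else if i < M then g (i - m) else i)" for i
  have pD: "i < m \<Longrightarrow> p i \<in> Dset" for i using d unfolding p_def m_def bij_betw_def by auto
  have pK: "m \<le> i \<Longrightarrow> i < M \<Longrightarrow> p i \<in> K" for i
    using g cK unfolding p_def bij_betw_def by auto
  have bij: "bij_betw p {..<M} {..<M}"
  proof -
    have inj: "inj_on p {..<M}"
    proof (rule inj_onI)
      fix a b assume ab: "a \<in> {..<M}" "b \<in> {..<M}" "p a = p b"
      show "a = b"
      proof (cases "a < m"; cases "b < m")
        assume "a < m" "b < m"
        thus ?thesis using ab d unfolding p_def m_def bij_betw_def inj_on_def by auto
      next
        assume "a < m" "\<not> b < m"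
        have "p a \<in> Dset" using pD \<open>a < m\<close> by blast
        moreover have "p b \<in> K" using pK \<open>\<not> b < m\<close> ab(2) by simp
        ultimately show ?thesis using ab(3) unfolding K_def by simp
      next
        assume "\<not> a < m" "b < m"
        have "p b \<in> Dset" using pD \<open>b < m\<close> by blast
        moreover have "p a \<in> K" using pK \<open>\<not> a < m\<close> ab(1) by simp
        ultimately show ?thesis using ab(3) unfolding K_def by simp
      next
        assume "\<not> a < m" "\<not> b < m"
        have "p a = g (a - m)" "p b = g (b - m)" using ab \<open>\<not> a < m\<close> \<open>\<not> b < m\<close> unfolding p_def by auto
        hence "g (a - m) = g (b - m)" using ab(3) by simp
        moreover have "a - m \<in> {..<card K}" "b - m \<in> {..<card K}" using ab cK \<open>\<not> a < m\<close> \<open>\<not> b < m\<close> by auto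
        ultimately have "a - m = b - m" using g(1) unfolding bij_betw_def inj_on_def by blast
        thus ?thesis using \<open>\<not> a < m\<close> \<open>\<not> b < m\<close> by simp
      qed
    qed
    have "p ` {..<M} \<subseteq> {..<M}"
    proof
      fix y assume "y \<in> p ` {..<M}"
      then obtain i where i: "i < M" "y = p i" by auto
      show "y \<in> {..<M}"
      proof (cases "i < m")
        case True thus ?thesis using pD[OF True] DM i by auto
      next
        case False thus ?thesis using pK[of i] i unfolding K_def by simp
      qed
    qed
    moreover have "{..<M} \<subseteq> p ` {..<M}"
    proof
      fix y assume y: "y \<in> {..<M}"
      show "y \<in> p ` {..<M}"
      proof (cases "y \<in> Dset")
        case True
        hence "y \<in> d ` {..<card Dset}" using d unfolding bij_betw_def by simp
        then obtain i where i: "i < m" "d i = y" unfolding m_def by auto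
        thus ?thesis using mM unfolding p_def by (intro image_eqI[of _ _ i]) auto
      next
        case False
        hence "y \<in> K" using y unfolding K_def by simp
        hence "y \<in> g ` {..<card K}" using g(1) unfolding bij_betw_def by simp
        then obtain j where j: "j < card K" "g j = y" by auto
        have "p (j + m) = y" using j cK unfolding p_def by auto
        moreover have "j + m < M" using j cK mM by simp
        ultimately show ?thesis by (intro image_eqI[of _ _ "j + m"]) auto
      qed
    qed
    ultimately show ?thesis using inj unfolding bij_betw_def by blast
  qed
  have perm: "p permutes {..<M}" using bij by (rule bij_imp_permutes) (use mM in \<open>simp add: p_def\<close>)
  have c1: "\<forall>i j. m \<le> i \<and> i < M \<and> j < m \<longrightarrow> R $$ (p i, p j) = 0"
  proof (intro allI impI)
    fix i j assume ij: "m \<le> i \<and> i < M \<and> j < m"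
    have pi: "p i \<in> K" "p i < M" using pK ij unfolding K_def by auto
    have pj: "p j \<in> Dset" "p j < M" using pD ij DM by auto
    show "R $$ (p i, p j) = 0"
    proof (rule ccontr)
      assume "R $$ (p i, p j) \<noteq> 0"
      hence "0 < R $$ (p i, p j)" using R_nn[OF pi(2) pj(2)] by simp
      hence "(p i, p j) \<in> ERel" unfolding ERel_def using pi pj by simp
      hence "p i \<in> Dset" using into_D pj(1) by blast
      thus False using pi(1) unfolding K_def by simp
    qed
  qed
  have c3: "\<forall>i j. m \<le> j \<and> j \<le> i \<and> i < M \<longrightarrow> R $$ (p i, p j) = 0"
  proof (intro allI impI)
    fix i j assume ij: "m \<le> j \<and> j \<le> i \<and> i < M"
    have pi: "p i = g (i - m)" "p i < M" "i - m < card K" using ij pK cK unfolding p_def K_def by auto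
    have pj: "p j = g (j - m)" "p j < M" "j - m < card K" using ij pK cK unfolding p_def K_def by auto
    show "R $$ (p i, p j) = 0"
    proof (rule ccontr)
      assume "R $$ (p i, p j) \<noteq> 0"
      hence "0 < R $$ (p i, p j)" using R_nn[OF pi(2) pj(2)] by simp
      hence "(g (i - m), g (j - m)) \<in> ERel" unfolding ERel_def using pi pj by simp
      hence "i - m < j - m" using g(2) pi(3) pj(3) by blast
      thus False using ij by linarith
    qed
  qed
  have c2: "irred m (\<lambda>i j. R $$ (p i, p j))"
    unfolding irred_def
  proof (intro allI impI)
    fix i j assume ij: "i < m" "j < m"
    define Rel where "Rel = {(a, b). a < m \<and> b < m \<and> R $$ (p a, p b) > 0}"
    define dinv where "dinv = inv_into {..<m} d"
    have dinv: "x \<in> Dset \<Longrightarrow> dinv x < m \<and> p (dinv x) = x" for x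
    proof -
      assume x: "x \<in> Dset"
      hence "x \<in> d ` {..<m}" using d unfolding bij_betw_def m_def by simp
      hence "dinv x \<in> {..<m}" "d (dinv x) = x" unfolding dinv_def by (rule inv_into_into, rule f_inv_into_f)
      thus ?thesis unfolding p_def by simp
    qed
    have dd: "k < m \<Longrightarrow> dinv (p k) = k" for k
    proof -
      assume k: "k < m"
      have "inj_on d {..<m}" using d unfolding bij_betw_def m_def by simp
      thus ?thesis using k unfolding dinv_def p_def by (simp add: inv_into_f_f)
    qed
    have map: "(x, y) \<in> SD\<^sup>+ \<Longrightarrow> (dinv x, dinv y) \<in> Rel\<^sup>+" for x y
    proof (induction rule: trancl_induct)
      case (base y)
      hence "x \<in> Dset" "y \<in> Dset" "0 < R $$ (x, y)" unfolding SD_def ERel_def by auto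
      thus ?case using dinv unfolding Rel_def by auto
    next
      case (step y z)
      hence "y \<in> Dset" "z \<in> Dset" "0 < R $$ (y, z)" unfolding SD_def ERel_def by auto
      hence "(dinv y, dinv z) \<in> Rel" using dinv unfolding Rel_def by auto
      thus ?case using step(3) by simp
    qed
    have "(p i, p j) \<in> ERel\<^sup>+" using Dset_reach[OF pD[OF ij(1)]] pD[OF ij(2)] DM by auto
    hence "(p i, p j) \<in> SD\<^sup>+" using within_D pD[OF ij(2)] by blast
    from map[OF this] show "(i, j) \<in> Rel\<^sup>+" using dd ij by simp
  qed
  show ?thesis using perm m0 mM c1 c2 c3 by blast
qed

end


lemma delta_eigen:
  fixes X :: "real mat" and t :: real
  assumes X: "X \<in> carrier_mat n n" and n: "0 < n"
    and d: "complex_of_real t = delta (map_mat complex_of_real X)"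
  shows "\<exists>v. v \<in> carrier_vec n \<and> v \<noteq> 0\<^sub>v n \<and> map_mat complex_of_real X *\<^sub>v v = complex_of_real t \<cdot>\<^sub>v v"
proof -
  define Y where "Y = map_mat complex_of_real X"
  have Y: "Y \<in> carrier_mat n n" unfolding Y_def using X by simp
  define S where "S = {e \<in> spectrum Y. cmod e = spectral_radius Y \<and> Arg e \<ge> 0}"
  have cnj_ev: "cnj e \<in> spectrum Y" if e: "e \<in> spectrum Y" for e
  proof -
    from e obtain v where v: "v \<in> carrier_vec n" "v \<noteq> 0\<^sub>v n" "Y *\<^sub>v v = e \<cdot>\<^sub>v v"
      unfolding spectrum_def eigenvalue_def eigenvector_def using Y by auto
    define w where "w = map_vec cnj v"
    have w: "w \<in> carrier_vec n" unfolding w_def using v by simp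
    have "w \<noteq> 0\<^sub>v n"
    proof
      assume "w = 0\<^sub>v n"
      have "v $ j = 0" if j: "j < n" for j
      proof -
        have "w $ j = 0" using \<open>w = 0\<^sub>v n\<close> j by simp
        thus ?thesis unfolding w_def using v(1) j by simp
      qed
      hence "v = 0\<^sub>v n" using v(1) by (intro eq_vecI) auto
      thus False using v(2) by simp
    qed
    moreover have "Y *\<^sub>v w = cnj e \<cdot>\<^sub>v w"
    proof (rule eq_vecI)
      fix i assume "i < dim_vec (cnj e \<cdot>\<^sub>v w)"
      hence i: "i < n" using w by simp
      have "(Y *\<^sub>v w) $ i = (\<Sum>j<n. Y $$ (i, j) * cnj (v $ j))"
        using Y i w v(1) unfolding w_def by (simp add: scalar_prod_def atLeast0LessThan)
      also have "\<dots> = cnj (\<Sum>j<n. Y $$ (i, j) * v $ j)"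
        using Y X i unfolding Y_def by simp
      also have "(\<Sum>j<n. Y $$ (i, j) * v $ j) = (Y *\<^sub>v v) $ i"
        using Y i v(1) by (simp add: scalar_prod_def atLeast0LessThan)
      also have "\<dots> = e * v $ i" using v(3) v(1) i by simp
      finally show "(Y *\<^sub>v w) $ i = (cnj e \<cdot>\<^sub>v w) $ i" using w i unfolding w_def by simp
    qed (use Y w in simp)
    ultimately show ?thesis unfolding spectrum_def eigenvalue_def eigenvector_def using Y w by auto
  qed
  from spectral_radius_mem_max(1)[OF Y n] obtain e0 where e0: "e0 \<in> spectrum Y" "cmod e0 = spectral_radius Y"
    by auto
  have Sne: "S \<noteq> {}"
  proof (cases "0 \<le> Im e0")
    case True
    hence "e0 \<in> S" unfolding S_def using e0 by (simp add: Arg_less_0)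
    thus ?thesis by blast
  next
    case False
    hence "cnj e0 \<in> S" unfolding S_def using e0 cnj_ev[OF e0(1)] by (simp add: Arg_less_0)
    thus ?thesis by blast
  qed
  have Sfin: "finite S" unfolding S_def using card_finite_spectrum(1)[OF Y] by simp
  define r where "r = Max (Re ` S)"
  have "r \<in> Re ` S" unfolding r_def using Sfin Sne by (intro Max_in) auto
  then obtain e where e: "e \<in> S" "Re e = r" by blast
  have emax: "\<forall>u\<in>S. Re u \<le> Re e"
  proof
    fix u assume "u \<in> S"
    hence "Re u \<le> r" unfolding r_def using Sfin by (intro Max_ge) auto
    thus "Re u \<le> Re e" using e(2) by simp
  qed
  have uniq: "e' = e" if e': "e' \<in> S" "\<forall>u\<in>S. Re u \<le> Re e'" for e'
  proof -
    have "Re e \<le> Re e'" using e'(2) e(1) by blast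
    moreover have "Re e' \<le> Re e" using emax e'(1) by blast
    ultimately have re: "Re e' = Re e" by simp
    have nrm: "cmod e' = cmod e" "0 \<le> Im e'" "0 \<le> Im e" using e' e(1) unfolding S_def by (auto simp: Arg_less_0)
    have "(Re e')\<^sup>2 + (Im e')\<^sup>2 = (Re e)\<^sup>2 + (Im e)\<^sup>2" using nrm(1) unfolding cmod_def by simp
    hence "(Im e')\<^sup>2 = (Im e)\<^sup>2" using re by simp
    hence "Im e' = Im e" using nrm(2,3) by (simp add: power2_eq_iff_nonneg)
    thus ?thesis using re by (simp add: complex_eqI)
  qed
  have "delta Y = e" unfolding delta_def Let_def S_def[symmetric]
  proof (rule the_equality)
    show "e \<in> S \<and> (\<forall>u\<in>S. Re u \<le> Re e)" using e(1) emax by blast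
    show "\<And>e'. e' \<in> S \<and> (\<forall>u\<in>S. Re u \<le> Re e') \<Longrightarrow> e' = e" using uniq by blast
  qed
  hence "complex_of_real t \<in> spectrum Y" using d e(1) unfolding Y_def S_def by simp
  then obtain v where "eigenvector Y v (complex_of_real t)" unfolding spectrum_def eigenvalue_def by auto
  thus ?thesis unfolding eigenvector_def Y_def using Y X by auto
qed


context qbd begin

lemma T_edge:
  assumes e: "(s, s') \<in> {(a, b). a \<in> states M0 M \<and> b \<in> states M0 M \<and> Tmat A B C0 a b > 0}"
    and k: "2 \<le> fst s"
  shows "fst s - 1 \<le> fst s' \<and> snd s < M \<and> snd s' < M \<and> 0 < A (fst s' + 1 - fst s) $$ (snd s, snd s')"
proof -
  obtain k i l j where s: "s = (k, i)" "s' = (l, j)" by (cases s, cases s') auto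
  have st: "(k, i) \<in> states M0 M" "(l, j) \<in> states M0 M" "0 < Tmat A B C0 (k, i) (l, j)" using e s by auto
  have k2: "2 \<le> k" using k s by simp
  hence kl: "k - 1 \<le> l" using st(3) by (auto split: if_splits)
  hence A: "0 < A (l + 1 - k) $$ (i, j)" using st(3) k2 by simp
  have "i < M" using st(1) k2 unfolding states_def by auto
  moreover have "j < M" using st(2) k2 kl unfolding states_def by auto
  ultimately show ?thesis using s kl A by simp
qed

lemma T_down:
  assumes "(s, t) \<in> {(a, b). a \<in> states M0 M \<and> b \<in> states M0 M \<and> Tmat A B C0 a b > 0}\<^sup>+"
  shows "2 \<le> L \<Longrightarrow> L \<le> fst s \<Longrightarrow> fst t < L \<Longrightarrow> \<exists>n b. fp n (fst s - L + 1) (snd s) b"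
  using assms
proof (induction arbitrary: L rule: converse_trancl_induct)
  case (base s)
  from T_edge[OF base.hyps] base.prems(1,2) have e: "fst s - 1 \<le> fst t" "snd s < M" "snd t < M"
    "0 < A (fst t + 1 - fst s) $$ (snd s, snd t)" by auto
  have "fst t = fst s - 1" "L = fst s" using e(1) base.prems by auto
  hence "fst s - L + 1 = 1" "fst t + 1 - fst s = 0" using base.prems by auto
  thus ?case using fp1[OF e(2,3)] e(4) by auto
next
  case (step s s')
  from T_edge[OF step.hyps(1)] step.prems(1,2) have e: "fst s - 1 \<le> fst s'" "snd s < M" "snd s' < M"
    "0 < A (fst s' + 1 - fst s) $$ (snd s, snd s')" by auto
  show ?case
  proof (cases "fst s' < L")
    case True
    have "fst s' = fst s - 1" "L = fst s" using e(1) True step.prems(1,2) by auto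
    hence "fst s - L + 1 = 1" "fst s' + 1 - fst s = 0" using step.prems(1,2) by auto
    thus ?thesis using fp1[OF e(2,3)] e(4) by auto
  next
    case False
    hence "L \<le> fst s'" by simp
    from step.IH[OF step.prems(1) this step.prems(3)] obtain n b where fb: "fp n (fst s' - L + 1) (snd s') b" by blast
    define m where "m = fst s' + 1 - fst s"
    have "2 \<le> (fst s - L + 1) + m" unfolding m_def using False e(1) step.prems(1,2) by auto
    moreover have "(fst s - L + 1) + m - 1 = fst s' - L + 1" unfolding m_def using False e(1) step.prems(1,2) by auto
    ultimately have "fp (Suc n) (fst s - L + 1) (snd s) b" using fp2[OF e(2,3)] e(4) fb unfolding m_def by auto
    thus ?thesis by blast
  qed
qed

end

theorem proposition2p4:
  fixes M0 M :: nat
    and A :: "nat \<Rightarrow> real mat" and B :: "nat \<Rightarrow> real mat" and C0 :: "real mat"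
    and pi :: "nat \<Rightarrow> real" and \<theta> :: real
  assumes pos: "0 < M0" "0 < M"
    and dimA: "\<And>k. A k \<in> carrier_mat M M"
    and dimB0: "B 0 \<in> carrier_mat M0 M0"
    and dimB: "\<And>k. 1 \<le> k \<Longrightarrow> B k \<in> carrier_mat M0 M"
    and dimC: "C0 \<in> carrier_mat M M0"
    and nnA: "\<And>k i j. i < M \<Longrightarrow> j < M \<Longrightarrow> 0 \<le> A k $$ (i, j)"
    and nnB0: "\<And>i j. i < M0 \<Longrightarrow> j < M0 \<Longrightarrow> 0 \<le> B 0 $$ (i, j)"
    and nnB: "\<And>k i j. 1 \<le> k \<Longrightarrow> i < M0 \<Longrightarrow> j < M \<Longrightarrow> 0 \<le> B k $$ (i, j)"
    and nnC: "\<And>i j. i < M \<Longrightarrow> j < M0 \<Longrightarrow> 0 \<le> C0 $$ (i, j)"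
    and sumA: "\<And>i j. i < M \<Longrightarrow> j < M \<Longrightarrow> summable (\<lambda>k. A k $$ (i, j))"
    and stochA: "\<And>i. i < M \<Longrightarrow> (\<Sum>j<M. msuminf M A $$ (i, j)) = 1"
    and sumB: "\<And>i j. i < M0 \<Longrightarrow> j < M \<Longrightarrow> summable (\<lambda>k. B (Suc k) $$ (i, j))"
    and stochB: "\<And>i. i < M0 \<Longrightarrow>
       (\<Sum>j<M0. B 0 $$ (i, j)) + (\<Sum>j<M. \<Sum>k. B (Suc k) $$ (i, j)) = 1"
    and stochC: "\<And>i. i < M \<Longrightarrow>
       (\<Sum>j<M0. C0 $$ (i, j)) + (\<Sum>j<M. \<Sum>k. A (Suc k) $$ (i, j)) = 1"
    and piA: "\<And>j. j < M \<Longrightarrow> (\<Sum>i<M. pi i * msuminf M A $$ (i, j)) = pi j"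
    and pie: "(\<Sum>i<M. pi i) = 1"
    and irrT: "irred_T M0 M (Tmat A B C0)"
    and irrA: "irred_mat (msuminf M A)"
    and rho: "(\<Sum>i<M. pi i * (\<Sum>k. real k * (\<Sum>j<M. A k $$ (i, j)))) < 1"
    and rA: "conv_radius_A M A > 1"
    and th1: "1 < \<theta>" and th2: "ereal \<theta> < conv_radius_A M A"
    and thdelta: "complex_of_real \<theta> = delta (map_mat complex_of_real (Astar M A \<theta>))"
  shows "irred_mat (Rstar1 M A) \<or>
         (\<exists>p m. p permutes {..<M} \<and> 0 < m \<and> m \<le> M \<and>
            (\<forall>i j. m \<le> i \<and> i < M \<and> j < m \<longrightarrow> Rstar1 M A $$ (p i, p j) = 0) \<and>
            irred m (\<lambda>i j. Rstar1 M A $$ (p i, p j)) \<and>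
            (\<forall>i j. m \<le> j \<and> j \<le> i \<and> i < M \<longrightarrow> Rstar1 M A $$ (p i, p j) = 0))"
proof -
  have th0: "0 < \<theta>" using th1 by simp
  have sumth: "summable (\<lambda>k. \<theta> ^ k * A k $$ (i, j))" if ij: "i < M" "j < M" for i j
  proof -
    have "conv_radius_A M A \<le> conv_radius (\<lambda>k. A k $$ (i, j))"
      unfolding conv_radius_A_def using ij by (intro INF_lower) auto
    hence "ereal (norm \<theta>) < conv_radius (\<lambda>k. A k $$ (i, j))" using th2 th0 by simp
    from summable_in_conv_radius[OF this] show ?thesis by (simp add: mult.commute)
  qed
  have stoch: "(\<Sum>j<M. \<Sum>k. A k $$ (i, j)) = 1" if i: "i < M" for i
    using stochA[OF i] i unfolding msuminf_def by simp
  interpret qbd M A \<theta>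
    by unfold_locales (use pos nnA sumth th1 stoch in auto)
  interpret qbd2 M A \<theta> by unfold_locales (rule dimA)
  have down: "\<exists>b. fpa 1 i b" if i: "i < M" for i
  proof -
    have s: "(2, i) \<in> states M0 M" unfolding states_def using i by auto
    have t: "(0, 0) \<in> states M0 M" unfolding states_def using pos by auto
    have "((2, i), (0, 0)) \<in> {(a, b). a \<in> states M0 M \<and> b \<in> states M0 M \<and> Tmat A B C0 a b > 0}\<^sup>+"
      using irrT s t unfolding irred_T_def by blast
    from T_down[OF this, of 2] show ?thesis unfolding fpa_def by auto
  qed
  interpret qbd3 M A \<theta> by unfold_locales (rule down)
  have irrA': "irred M (\<lambda>i j. \<Sum>k. A k $$ (i, j))"
  proof -
    have d: "dim_row (msuminf M A) = M" unfolding msuminf_def by simp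
    have "{(a, b). a < M \<and> b < M \<and> msuminf M A $$ (a, b) > 0} = {(a, b). a < M \<and> b < M \<and> (\<Sum>k. A k $$ (a, b)) > 0}"
      unfolding msuminf_def by auto
    thus ?thesis using irrA unfolding irred_mat_def irred_def d by simp
  qed
  interpret qbd4 M A \<theta> by unfold_locales (rule irrA')
  obtain v where v: "v \<in> carrier_vec M" "v \<noteq> 0\<^sub>v M"
    "map_mat complex_of_real (Astar M A \<theta>) *\<^sub>v v = complex_of_real \<theta> \<cdot>\<^sub>v v"
    using delta_eigen[OF Astar_carrier pos(2) thdelta] by blast
  have Dne: "Dset \<noteq> {}"
  proof
    assume "Dset = {}"
    hence acyc: "\<And>a. a < M \<Longrightarrow> (a, a) \<notin> ERel\<^sup>+" unfolding Dset_def by blast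
    have pot: "\<And>p q m. p < M \<Longrightarrow> q < M \<Longrightarrow> 0 < A m $$ (p, q) \<Longrightarrow> m + phi p \<le> phi q + 1"
      using phi_pot[OF acyc] by blast
    have piA': "\<And>j. j < M \<Longrightarrow> (\<Sum>i<M. pi i * Ab i j) = pi j"
    proof -
      fix j assume j: "j < M"
      have "(\<Sum>i<M. pi i * Ab i j) = (\<Sum>i<M. pi i * msuminf M A $$ (i, j))"
        unfolding Ab_def msuminf_def using j by simp
      thus "(\<Sum>i<M. pi i * Ab i j) = pi j" using piA[OF j] by simp
    qed
    have "(\<Sum>i<M. pi i * (\<Sum>k. real k * (\<Sum>j<M. A k $$ (i, j)))) = 1"
      by (rule drift_one[OF pot v piA' pie])
    thus False using rho by simp
  qed
  show ?thesis using R_form[OF Dne] .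
qed


end
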